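(* Let $u,v\in\Sigma_n$ satisfy $\ell(uv)=\ell(u)+\ell(v)$. Let $T_u$ be a BSL of $D(u)$ all of whose labels are marked, and let $T_v$ be a BSL of $D(v)$ all of whose labels are unmarked. Then $T=T_u v+uT_v$ is a BSL of $D(uv)$. Conversely, for every $w\in\Sigma_n$, every BSL $T$ of $D(w)$ arises in this way from a unique triple $(u,v)$ with $uv=w$, $\ell(w)=\ell(u)+\ell(v)$, together with a unique BSL $T_u$ of $D(u)$ using only marked letters and a unique BSL $T_v$ of $D(v)$ using only unmarked letters.
   Context: Permutations in $\Sigma_n$ are multiplied as functions; $s_i$ is the transposition of $i$ and $i+1$; $\ell(w)=\#\{i<j: w(i)>w(j)\}$ is the length. The diagram of $w$ is $D(w)=\{(i,w(j)) : i<j,\ w(i)>w(j)\}$, a set of boxes $(i,j)$ with $i$ the row index (top to bottom) and $j$ the column index (left to right). Fix the totally ordered alphabet $\cdots<3'<2'<1'<1<2<3<\cdots$; letters $i'$ are marked, letters $i$ unmarked. A labeling of $D(w)$ is a map from $D(w)$ to the alphabet. The hook of a box $b=(i,j)\in D(w)$ consists of $b$, the boxes of $D(w)$ in column $j$ below $b$, and the boxes of $D(w)$ in row $i$ to the right of $b$. A hook is balanced (for a labeling $T$) if, when its entries are rearranged so that they weakly increase along the path starting at the rightmost box of the row part, going left to the corner $b$, and then down the column part, the entry in the corner $b$ is unchanged. A balanced super labeling (BSL) of $D(w)$ is a labeling $T$ such that every hook is balanced, no unmarked letter occurs twice in any column, no marked letter occurs twice in any row, and $j'\le T(i,j)\le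 i$ for every box $(i,j)\in D(w)$. The empty diagram has exactly one labeling. A labeling of $D(w)$ is regarded as an $n\times n$ array which is $0$ outside $D(w)$, with the conventions $0+a=a+0=a$ for any letter $a$ and $1'<0<1$. For an $n\times n$ array $A$ and $w\in\Sigma_n$ define $(wA)_{i,j}=A_{i,w(j)}$ and $(Aw)_{i,j}=A_{w^{-1}(i),j}$. *)

theory Defs
  imports Main "HOL-Combinatorics.Permutations" "HOL-Library.Multiset"
begin

(* Permutations of {1..n} are functions nat => nat with  w permutes {1..n};
   the product uv is function composition u o v. *)

definition perm_len :: "nat \<Rightarrow> (nat \<Rightarrow> nat) \<Rightarrow> nat" where
  "perm_len n w = card {(i, j). i \<in> {1..n} \<and> j \<in> {1..n} \<and> i < j \<and> w j < w i}"

definition diagram :: "nat \<Rightarrow> (nat \<Rightarrow> nat) \<Rightarrow> (nat \<times> nat) set" where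
  "diagram n w = {(i, w j) | i j. i \<in> {1..n} \<and> j \<in> {1..n} \<and> i < j \<and> w j < w i}"

(* Letters encoded as nonzero integers: unmarked letter k is  int k, marked letter k' is  - int k.
   Then  ... < 3' < 2' < 1' < 1 < 2 < 3 < ...  is the usual order on int, and 0 (the value of an
   array outside the diagram) satisfies 1' < 0 < 1.  A labeling is an array nat => nat => int
   (row, column), zero outside the diagram. *)
type_synonym labeling = "nat \<Rightarrow> nat \<Rightarrow> int"

definition is_marked :: "int \<Rightarrow> bool" where "is_marked a \<longleftrightarrow> a < 0"
definition is_unmarked :: "int \<Rightarrow> bool" where "is_unmarked a \<longleftrightarrow> 0 < a"

definition hook_row :: "(nat \<times> nat) set \<Rightarrow> nat \<times> nat \<Rightarrow> (nat \<times> nat) set" where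
  "hook_row D b = {(r, c) \<in> D. r = fst b \<and> snd b < c}"

definition hook_col :: "(nat \<times> nat) set \<Rightarrow> nat \<times> nat \<Rightarrow> (nat \<times> nat) set" where
  "hook_col D b = {(r, c) \<in> D. c = snd b \<and> fst b < r}"

definition hook :: "(nat \<times> nat) set \<Rightarrow> nat \<times> nat \<Rightarrow> (nat \<times> nat) set" where
  "hook D b = insert b (hook_row D b \<union> hook_col D b)"

(* Balanced: sorting the hook entries weakly increasingly along the path (row part from the right,
   then the corner, then the column part downward), the corner (position = number of row boxes,
   counted from 0) keeps its entry. *)
definition balanced_hook :: "(nat \<times> nat) set \<Rightarrow> labeling \<Rightarrow> nat \<times> nat \<Rightarrow> bool" where
  "balanced_hook D T b \<longleftrightarrow>
     sorted_list_of_multiset (image_mset (\<lambda>(r, c). T r c) (mset_set (hook D b)))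
       ! card (hook_row D b) = T (fst b) (snd b)"

definition is_BSL :: "nat \<Rightarrow> (nat \<Rightarrow> nat) \<Rightarrow> labeling \<Rightarrow> bool" where
  "is_BSL n w T \<longleftrightarrow>
     (\<forall>i j. (i, j) \<notin> diagram n w \<longrightarrow> T i j = 0) \<and>
     (\<forall>(i, j) \<in> diagram n w. T i j \<noteq> 0 \<and> - int j \<le> T i j \<and> T i j \<le> int i) \<and>
     (\<forall>b \<in> diagram n w. balanced_hook (diagram n w) T b) \<and>
     (\<forall>(i, j) \<in> diagram n w. \<forall>(i', j') \<in> diagram n w.
        (i, j) \<noteq> (i', j') \<and> j = j' \<and> T i j = T i' j' \<longrightarrow> \<not> is_unmarked (T i j)) \<and>
     (\<forall>(i, j) \<in> diagram n w. \<forall>(i', j') \<in> diagram n w.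
        (i, j) \<noteq> (i', j') \<and> i = i' \<and> T i j = T i' j' \<longrightarrow> \<not> is_marked (T i j))"

definition perm_act_left :: "(nat \<Rightarrow> nat) \<Rightarrow> labeling \<Rightarrow> labeling" where
  "perm_act_left w A = (\<lambda>i j. A i (w j))"

definition perm_act_right :: "labeling \<Rightarrow> (nat \<Rightarrow> nat) \<Rightarrow> labeling" where
  "perm_act_right A w = (\<lambda>i j. A (inv w i) j)"

definition arr_add :: "labeling \<Rightarrow> labeling \<Rightarrow> labeling" where
  "arr_add A B = (\<lambda>i j. A i j + B i j)"

end

theory Submission
  imports Defs
begin

lemma sorted_nth_pred:
  fixes xs :: "int list"
  assumes "sorted xs" "k < length xs" "\<And>x x'. P x \<Longrightarrow> x' \<le> x \<Longrightarrow> P x'"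
  shows "P (xs ! k) \<longleftrightarrow> k < length (filter P xs)"
  using assms
proof (induction xs arbitrary: k)
  case Nil then show ?case by simp
next
  case (Cons a xs)
  show ?case
  proof (cases "P a")
    case True
    then show ?thesis using Cons by (cases k) auto
  next
    case False
    have "\<forall>x\<in>set xs. \<not> P x" using False Cons.prems(1) Cons.prems(3) by auto
    then have "filter P xs = []" by (simp add: filter_empty_conv)
    moreover have "\<not> P ((a#xs)!k)"
      using False Cons.prems \<open>\<forall>x\<in>set xs. \<not> P x\<close> by (cases k) auto
    ultimately show ?thesis using False by simp
  qed
qed

lemma sorted_nth_eq:
  fixes xs :: "int list"
  assumes "sorted xs" "k < length xs"
  shows "xs ! k = y \<longleftrightarrow> length (filter (\<lambda>x. x < y) xs) \<le> k \<and> k < length (filter (\<lambda>x. x \<le> y) xs)"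
proof -
  have 1: "(xs!k < y) \<longleftrightarrow> k < length (filter (\<lambda>x. x < y) xs)"
    by (rule sorted_nth_pred[OF assms]) auto
  have 2: "(xs!k \<le> y) \<longleftrightarrow> k < length (filter (\<lambda>x. x \<le> y) xs)"
    by (rule sorted_nth_pred[OF assms]) auto
  show ?thesis using 1 2 by auto
qed

definition cnt :: "(nat \<times> nat) set \<Rightarrow> labeling \<Rightarrow> (int \<Rightarrow> bool) \<Rightarrow> nat" where
  "cnt A T P = card {p\<in>A. P (T (fst p) (snd p))}"

definition balc :: "(nat \<times> nat) set \<Rightarrow> (nat \<times> nat) set \<Rightarrow> labeling \<Rightarrow> int \<Rightarrow> bool" where
  "balc R C T y \<longleftrightarrow> cnt C T (\<lambda>x. x < y) \<le> cnt R T (\<lambda>x. y \<le> x) \<and>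
                     cnt R T (\<lambda>x. y < x) \<le> cnt C T (\<lambda>x. x \<le> y)"

lemma size_filter_image_mset_set:
  assumes "finite A"
  shows "size (filter_mset P (image_mset (\<lambda>(r, c). T r c) (mset_set A))) = cnt A T P"
proof -
  have "filter_mset P (image_mset (\<lambda>(r, c). T r c) (mset_set A)) =
        image_mset (\<lambda>(r, c). T r c) (filter_mset (\<lambda>p. P (T (fst p) (snd p))) (mset_set A))"
    by (simp add: filter_mset_image_mset case_prod_beta)
  also have "filter_mset (\<lambda>p. P (T (fst p) (snd p))) (mset_set A) = mset_set {p\<in>A. P (T (fst p) (snd p))}"
    using assms by (simp add: filter_mset_mset_set)
  finally show ?thesis by (simp add: cnt_def)
qed

lemma cnt_split: "finite A \<Longrightarrow> card A = cnt A T P + cnt A T (\<lambda>x. \<not> P x)"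
  unfolding cnt_def
  by (subst card_Un_disjoint[symmetric]) (auto intro: arg_cong[where f=card])

lemma balanced_iff:
  assumes "finite D" "b \<in> D"
  shows "balanced_hook D T b \<longleftrightarrow> balc (hook_row D b) (hook_col D b) T (T (fst b) (snd b))"
proof -
  obtain i j where b: "b = (i, j)" by (cases b)
  define R where "R = hook_row D b"
  define C where "C = hook_col D b"
  define f where "f = (\<lambda>(r::nat, c::nat). T r c)"
  define y where "y = T i j"
  have fR: "finite R" and fC: "finite C" using assms unfolding R_def C_def hook_row_def hook_col_def
    by (auto intro: finite_subset)
  have disj: "b \<notin> R" "b \<notin> C" "R \<inter> C = {}"
    unfolding R_def C_def hook_row_def hook_col_def b by auto
  have "mset_set (hook D b) = add_mset b (mset_set R + mset_set C)"
    unfolding hook_def R_def[symmetric] C_def[symmetric]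
    using disj fR fC by (simp add: mset_set_Union)
  then have M: "image_mset f (mset_set (hook D b)) = add_mset y (image_mset f (mset_set R) + image_mset f (mset_set C))"
    by (simp add: f_def y_def b)
  define xs where "xs = sorted_list_of_multiset (image_mset f (mset_set (hook D b)))"
  have sxs: "sorted xs" unfolding xs_def by simp
  have mxs: "mset xs = image_mset f (mset_set (hook D b))" unfolding xs_def by simp
  have len: "length xs = Suc (card R + card C)"
    using mxs M fR fC by (metis size_mset size_add_mset size_image_mset size_mset_set size_union)
  have lf: "\<And>P. length (filter P xs) = (if P y then 1 else 0) + cnt R T P + cnt C T P"
  proof -
    fix P
    have "length (filter P xs) = size (filter_mset P (mset xs))"
      by (metis mset_filter size_mset)
    also have "\<dots> = (if P y then 1 else 0) + size (filter_mset P (image_mset f (mset_set R))) + size (filter_mset P (image_mset f (mset_set C)))"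
      unfolding mxs M by simp
    finally show "length (filter P xs) = (if P y then 1 else 0) + cnt R T P + cnt C T P"
      using size_filter_image_mset_set[OF fR, of P T] size_filter_image_mset_set[OF fC, of P T]
      unfolding f_def by simp
  qed
  have "balanced_hook D T b \<longleftrightarrow> xs ! card R = y"
    unfolding balanced_hook_def xs_def R_def y_def b by (simp add: f_def)
  also have "\<dots> \<longleftrightarrow> length (filter (\<lambda>x. x < y) xs) \<le> card R \<and> card R < length (filter (\<lambda>x. x \<le> y) xs)"
    by (rule sorted_nth_eq[OF sxs]) (simp add: len)
  also have "\<dots> \<longleftrightarrow> balc R C T y"
  proof -
    have s1: "card R = cnt R T (\<lambda>x. x < y) + cnt R T (\<lambda>x. \<not> x < y)" by (rule cnt_split[OF fR])
    have s2: "card R = cnt R T (\<lambda>x. x \<le> y) + cnt R T (\<lambda>x. \<not> x \<le> y)" by (rule cnt_split[OF fR])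
    have e1: "cnt R T (\<lambda>x. \<not> x < y) = cnt R T (\<lambda>x. y \<le> x)" unfolding cnt_def by (simp add: not_less)
    have e2: "cnt R T (\<lambda>x. \<not> x \<le> y) = cnt R T (\<lambda>x. y < x)" unfolding cnt_def by (simp add: not_le)
    show ?thesis unfolding balc_def lf using s1 s2 e1 e2 by auto
  qed
  finally show ?thesis unfolding R_def C_def y_def b by simp
qed

definition sw :: "nat \<Rightarrow> nat \<Rightarrow> nat" where "sw r = transpose r (Suc r)"

lemma sw_simps[simp]: "sw r r = Suc r" "sw r (Suc r) = r"
  "c \<noteq> r \<Longrightarrow> c \<noteq> Suc r \<Longrightarrow> sw r c = c"
  by (auto simp: sw_def)

lemma sw_sw[simp]: "sw r (sw r c) = c"
  by (simp add: sw_def transpose_def)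

lemma sw_comp_sw[simp]: "sw r \<circ> sw r = id"
  by (simp add: fun_eq_iff)

lemma sw_comp_sw'[simp]: "sw r \<circ> (sw r \<circ> f) = f"
  by (simp add: fun_eq_iff)

lemma sw_bij: "bij (sw r)"
  by (metis bij_betw_imp_surj_on o_bij sw_comp_sw)

lemma inv_sw[simp]: "inv (sw r) = sw r"
  by (metis inv_unique_comp sw_comp_sw)

lemma sw_permutes: "1 \<le> r \<Longrightarrow> Suc r \<le> n \<Longrightarrow> sw r permutes {1..n}"
  unfolding sw_def by (rule permutes_swap_id) auto

lemma sw_eq_iff: "sw r a = sw r b \<longleftrightarrow> a = b"
  by (metis sw_sw)

lemma sw_cases: "sw r c = (if c = r then Suc r else if c = Suc r then r else c)"
  by (simp add: sw_def transpose_def)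

lemma diagram_iff:
  assumes "w permutes {1..n}"
  shows "(i, c) \<in> diagram n w \<longleftrightarrow> 1 \<le> i \<and> 1 \<le> c \<and> c \<le> n \<and> i < inv w c \<and> c < w i"
proof
  assume "(i, c) \<in> diagram n w"
  then obtain j where j: "c = w j" "i \<in> {1..n}" "j \<in> {1..n}" "i < j" "w j < w i"
    unfolding diagram_def by auto
  have "c \<in> {1..n}" using j permutes_in_image[OF assms] by auto
  moreover have "inv w c = j" using j permutes_inverses[OF assms] by auto
  ultimately show "1 \<le> i \<and> 1 \<le> c \<and> c \<le> n \<and> i < inv w c \<and> c < w i" using j by auto
next
  assume h: "1 \<le> i \<and> 1 \<le> c \<and> c \<le> n \<and> i < inv w c \<and> c < w i"
  have "inv w c \<in> {1..n}" using h permutes_in_image[OF permutes_inv[OF assms]] by auto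
  moreover have "w (inv w c) = c" using permutes_inverses[OF assms] by auto
  ultimately have "i \<in> {1..n} \<and> inv w c \<in> {1..n} \<and> i < inv w c \<and> w (inv w c) < w i \<and> (i, c) = (i, w (inv w c))"
    using h by auto
  then show "(i, c) \<in> diagram n w" unfolding diagram_def by blast
qed

lemma diagram_sub: "diagram n w \<subseteq> {1..n} \<times> (w ` {1..n})"
  unfolding diagram_def by auto

lemma finite_diagram[simp]: "finite (diagram n w)"
  by (rule finite_subset[OF diagram_sub]) auto

lemma perm_len_card:
  assumes "w permutes {1..n}"
  shows "perm_len n w = card (diagram n w)"
proof -
  let ?I = "{(i, j). i \<in> {1..n} \<and> j \<in> {1..n} \<and> i < j \<and> w j < w i}"
  have "diagram n w = (\<lambda>(i, j). (i, w j)) ` ?I" unfolding diagram_def by auto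
  moreover have "inj_on (\<lambda>(i, j). (i, w j)) ?I"
    using permutes_inj[OF assms] by (auto simp: inj_on_def inj_def)
  ultimately show ?thesis unfolding perm_len_def by (simp add: card_image)
qed

lemma inv_comp_perm:
  assumes "u permutes S" "v permutes S"
  shows "inv (u \<circ> v) = inv v \<circ> inv u"
  by (rule o_inv_distrib[OF permutes_bij[OF assms(1)] permutes_bij[OF assms(2)]])

lemma inv_sw_comp:
  assumes "w permutes S"
  shows "inv (sw r \<circ> w) = inv w \<circ> sw r"
  using o_inv_distrib[OF sw_bij permutes_bij[OF assms]] by simp

lemma swap_diagram:
  assumes w': "w' permutes {1..n}" and r: "1 \<le> r" "Suc r \<le> n"
    and asc: "inv w' r < inv w' (Suc r)"
  shows "(i, c) \<in> diagram n (sw r \<circ> w') \<longleftrightarrow> (i, sw r c) \<in> diagram n w' \<or> (i, c) = (inv w' r, r)"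
proof -
  have w: "sw r \<circ> w' permutes {1..n}" by (rule permutes_compose[OF w' sw_permutes[OF r]])
  have iw: "inv (sw r \<circ> w') c = inv w' (sw r c)" using inv_sw_comp[OF w'] by simp
  have p1: "w' (inv w' r) = r" "w' (inv w' (Suc r)) = Suc r" using permutes_inverses[OF w'] by auto
  have "inv w' r \<noteq> inv w' (Suc r)" using asc by simp
  have e1: "w' i = r \<longleftrightarrow> i = inv w' r" "w' i = Suc r \<longleftrightarrow> i = inv w' (Suc r)"
    using permutes_inverses[OF w'] by metis+
  have p1r: "1 \<le> inv w' r" using permutes_in_image[OF permutes_inv[OF w'], of r] r by auto
  have rng: "1 \<le> sw r c \<and> sw r c \<le> n \<longleftrightarrow> 1 \<le> c \<and> c \<le> n" using r by (auto simp: sw_cases)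
  have key: "(1 \<le> i \<and> 1 \<le> c \<and> c \<le> n \<and> i < inv w' (sw r c) \<and> c < sw r (w' i)) \<longleftrightarrow>
        ((1 \<le> i \<and> 1 \<le> sw r c \<and> sw r c \<le> n \<and> i < inv w' (sw r c) \<and> sw r c < w' i) \<or> (i, c) = (inv w' r, r))"
  proof (cases "c = r")
    case True
    then show ?thesis using r asc e1 p1r by (cases "w' i = r"; cases "w' i = Suc r") (auto simp: sw_cases)
  next
    case False
    show ?thesis
    proof (cases "c = Suc r")
      case True
      then show ?thesis using r asc e1 p1r False by (cases "w' i = r"; cases "w' i = Suc r") (auto simp: sw_cases)
    next
      case F2: False
      then show ?thesis using r asc e1 p1r False by (cases "w' i = r"; cases "w' i = Suc r") (auto simp: sw_cases)
    qed
  qed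
  show ?thesis
    unfolding diagram_iff[OF w] diagram_iff[OF w'] iw o_apply using key by simp
qed

lemma not_in_swapped:
  assumes w': "w' permutes {1..n}"
  shows "(inv w' r, Suc r) \<notin> diagram n w'"
  using permutes_inverses[OF w'] unfolding diagram_iff[OF w'] by auto

lemma img_sw_iff:
  "(i, c) \<in> (\<lambda>(i, c). (i, sw r c)) ` D \<longleftrightarrow> (i, sw r c) \<in> D"
proof
  assume "(i, c) \<in> (\<lambda>(i, c). (i, sw r c)) ` D"
  then obtain a b where "(a, b) \<in> D" "(i, c) = (a, sw r b)" by auto
  then show "(i, sw r c) \<in> D" by simp
next
  assume "(i, sw r c) \<in> D"
  then have "(\<lambda>(i, c). (i, sw r c)) (i, sw r c) \<in> (\<lambda>(i, c). (i, sw r c)) ` D" by (rule imageI)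
  then show "(i, c) \<in> (\<lambda>(i, c). (i, sw r c)) ` D" by simp
qed

lemma swap_diagram_eq:
  assumes w': "w' permutes {1..n}" and r: "1 \<le> r" "Suc r \<le> n"
    and asc: "inv w' r < inv w' (Suc r)"
  shows "diagram n (sw r \<circ> w') = insert (inv w' r, r) ((\<lambda>(i, c). (i, sw r c)) ` diagram n w')"
proof (rule set_eqI)
  fix x show "x \<in> diagram n (sw r \<circ> w') \<longleftrightarrow> x \<in> insert (inv w' r, r) ((\<lambda>(i, c). (i, sw r c)) ` diagram n w')"
    using swap_diagram[OF assms, of "fst x" "snd x"] img_sw_iff[of "fst x" "snd x" r "diagram n w'"]
    by (cases x) auto
qed

lemma card_swap_asc:
  assumes w': "w' permutes {1..n}" and r: "1 \<le> r" "Suc r \<le> n"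
    and asc: "inv w' r < inv w' (Suc r)"
  shows "card (diagram n (sw r \<circ> w')) = Suc (card (diagram n w'))"
proof -
  have inj: "inj_on (\<lambda>(i, c). (i, sw r c)) (diagram n w')"
    by (auto simp: inj_on_def sw_eq_iff)
  have "(inv w' r, r) \<notin> (\<lambda>(i, c). (i, sw r c)) ` diagram n w'"
    using not_in_swapped[OF w', of r] img_sw_iff[of "inv w' r" r r "diagram n w'"] by simp
  then show ?thesis unfolding swap_diagram_eq[OF assms]
    using card_image[OF inj] by simp
qed

lemma card_swap_desc:
  assumes w: "w permutes {1..n}" and r: "1 \<le> r" "Suc r \<le> n"
    and desc: "inv w (Suc r) < inv w r"
  shows "card (diagram n w) = Suc (card (diagram n (sw r \<circ> w)))"
proof -
  have w': "sw r \<circ> w permutes {1..n}" by (rule permutes_compose[OF w sw_permutes[OF r]])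
  have "inv (sw r \<circ> w) r < inv (sw r \<circ> w) (Suc r)" using desc inv_sw_comp[OF w] by simp
  from card_swap_asc[OF w' r this] show ?thesis by simp
qed

definition Inv :: "nat \<Rightarrow> (nat \<Rightarrow> nat) \<Rightarrow> (nat \<times> nat) set" where
  "Inv n w = {(i, j). i \<in> {1..n} \<and> j \<in> {1..n} \<and> i < j \<and> w j < w i}"

lemma perm_len_subadd:
  assumes x: "x permutes {1..n}" and y: "y permutes {1..n}"
  shows "perm_len n (x \<circ> y) \<le> perm_len n x + perm_len n y"
proof -
  have fin: "finite (Inv n w)" for w
    by (rule finite_subset[of _ "{1..n} \<times> {1..n}"]) (auto simp: Inv_def)
  let ?g = "\<lambda>(a, b). (inv y a, inv y b)"
  have "Inv n (x \<circ> y) \<subseteq> Inv n y \<union> ?g ` Inv n x"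
  proof
    fix p assume p: "p \<in> Inv n (x \<circ> y)"
    then obtain i j where ij: "p = (i, j)" "i \<in> {1..n}" "j \<in> {1..n}" "i < j" "x (y j) < x (y i)"
      unfolding Inv_def by auto
    show "p \<in> Inv n y \<union> ?g ` Inv n x"
    proof (cases "y j < y i")
      case True then show ?thesis using ij unfolding Inv_def by auto
    next
      case False
      then have "y i < y j" using ij permutes_inj[OF y] by (metis inj_eq linorder_neqE_nat less_irrefl)
      moreover have "y i \<in> {1..n}" "y j \<in> {1..n}" using ij permutes_in_image[OF y] by auto
      ultimately have "(y i, y j) \<in> Inv n x" using ij unfolding Inv_def by auto
      moreover have "?g (y i, y j) = p" using ij permutes_inverses[OF y] by simp
      ultimately show ?thesis by (metis UnI2 image_eqI)
    qed
  qed
  then have "card (Inv n (x \<circ> y)) \<le> card (Inv n y \<union> ?g ` Inv n x)"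
    by (rule card_mono[rotated]) (simp add: fin)
  also have "\<dots> \<le> card (Inv n y) + card (?g ` Inv n x)" by (rule card_Un_le)
  also have "\<dots> \<le> card (Inv n y) + card (Inv n x)" using card_image_le[OF fin] by simp
  finally show ?thesis unfolding perm_len_def Inv_def by simp
qed

lemma diagram_empty_id:
  assumes u: "u permutes {1..n}" and e: "diagram n u = {}"
  shows "u = id"
proof -
  have "\<forall>i. 1 \<le> i \<longrightarrow> i \<le> n \<longrightarrow> u i = i"
  proof (rule allI, induct_tac i rule: less_induct)
    fix i :: nat
    assume IH: "\<And>k. k < i \<Longrightarrow> 1 \<le> k \<longrightarrow> k \<le> n \<longrightarrow> u k = k"
    show "1 \<le> i \<longrightarrow> i \<le> n \<longrightarrow> u i = i"
    proof (intro impI)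
      assume i: "1 \<le> i" "i \<le> n"
      have ui: "u i \<in> {1..n}" using i permutes_in_image[OF u] by auto
      have iu: "inv u i \<in> {1..n}" using i permutes_in_image[OF permutes_inv[OF u]] by auto
      have inj: "inj u" by (rule permutes_inj[OF u])
      show "u i = i"
      proof (rule ccontr)
        assume ne: "u i \<noteq> i"
        have "\<not> u i < i"
        proof
          assume "u i < i"
          then have "u (u i) = u i" using IH ui by auto
          then show False using ne inj by (metis injD)
        qed
        then have gt: "i < u i" using ne by simp
        have "inv u i \<noteq> i" using ne permutes_inverses[OF u] by metis
        moreover have "\<not> inv u i < i"
        proof
          assume "inv u i < i"
          then have "u (inv u i) = inv u i" using IH iu by auto
          then show False using permutes_inverses[OF u] \<open>inv u i \<noteq> i\<close> by metis
        qed
        ultimately have "i < inv u i" by simp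
        then have "(i, i) \<in> diagram n u" unfolding diagram_iff[OF u] using i gt by auto
        then show False using e by simp
      qed
    qed
  qed
  then show ?thesis
  proof (intro ext)
    fix x assume H: "\<forall>i. 1 \<le> i \<longrightarrow> i \<le> n \<longrightarrow> u i = i"
    show "u x = id x"
    proof (cases "x \<in> {1..n}")
      case True then show ?thesis using H by auto
    next
      case False then show ?thesis using permutes_not_in[OF u] by simp
    qed
  qed
qed

lemma diagram_id: "diagram n id = {}"
  unfolding diagram_def by auto

lemma disj_diagrams:
  assumes u: "u permutes {1..n}" and v: "v permutes {1..n}"
    and "(v i, j) \<in> diagram n u"
  shows "(i, inv u j) \<notin> diagram n v"
proof
  assume "(i, inv u j) \<in> diagram n v"
  then have "inv u j < v i" unfolding diagram_iff[OF v] by simp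
  moreover have "v i < inv u j" using assms(3) unfolding diagram_iff[OF u] by simp
  ultimately show False by simp
qed

lemma combine_eq:
  assumes u: "u permutes {1..n}" and v: "v permutes {1..n}"
  shows "arr_add (perm_act_right Tu (inv v)) (perm_act_left (inv u) Tv) = (\<lambda>i j. Tu (v i) j + Tv i (inv u j))"
  unfolding arr_add_def perm_act_right_def perm_act_left_def
  using inv_inv_eq[OF permutes_bij[OF v]] by simp

lemma row_diagram:
  assumes v: "v permutes {1..n}" and i: "1 \<le> i" "i \<le> n"
  shows "{c. (i, c) \<in> diagram n v} = {1..<v i} - v ` {1..<i}"
proof -
  have vi: "v i \<in> {1..n}" using i permutes_in_image[OF v] by auto
  show ?thesis
  proof (rule set_eqI, rule iffI)
    fix c assume "c \<in> {c. (i, c) \<in> diagram n v}"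
    then have c: "1 \<le> c" "c \<le> n" "i < inv v c" "c < v i" unfolding diagram_iff[OF v] by auto
    have "c \<notin> v ` {1..<i}"
    proof
      assume "c \<in> v ` {1..<i}"
      then obtain k where k: "k < i" "c = v k" by auto
      then have "inv v c = k" using permutes_inverses[OF v] by simp
      then show False using c k by simp
    qed
    then show "c \<in> {1..<v i} - v ` {1..<i}" using c by auto
  next
    fix c assume c: "c \<in> {1..<v i} - v ` {1..<i}"
    have cn: "c \<in> {1..n}" using c vi by auto
    have ic: "inv v c \<in> {1..n}" using cn permutes_in_image[OF permutes_inv[OF v]] by auto
    have "v (inv v c) = c" using permutes_inverses[OF v] by auto
    moreover have "inv v c \<noteq> i" using c \<open>v (inv v c) = c\<close> by auto
    moreover have "\<not> inv v c < i"
    proof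
      assume "inv v c < i"
      then have "inv v c \<in> {1..<i}" using ic by auto
      then have "v (inv v c) \<in> v ` {1..<i}" by (rule imageI)
      then show False using c \<open>v (inv v c) = c\<close> by simp
    qed
    ultimately have "i < inv v c" by simp
    then show "c \<in> {c. (i, c) \<in> diagram n v}" unfolding diagram_iff[OF v] using c cn i by auto
  qed
qed

lemma rows_determine:
  assumes v1: "v1 permutes {1..n}" and v2: "v2 permutes {1..n}"
    and rows: "\<And>i. 1 \<le> i \<Longrightarrow> i \<le> n \<Longrightarrow> card {c. (i, c) \<in> diagram n v1} = card {c. (i, c) \<in> diagram n v2}"
  shows "v1 = v2"
proof -
  have "\<forall>i. 1 \<le> i \<longrightarrow> i \<le> n \<longrightarrow> v1 i = v2 i"
  proof (rule allI, induct_tac i rule: less_induct)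
    fix i :: nat
    assume IH: "\<And>k. k < i \<Longrightarrow> 1 \<le> k \<longrightarrow> k \<le> n \<longrightarrow> v1 k = v2 k"
    show "1 \<le> i \<longrightarrow> i \<le> n \<longrightarrow> v1 i = v2 i"
    proof (intro impI)
      assume i: "1 \<le> i" "i \<le> n"
      define A where "A = v1 ` {1..<i}"
      have A2: "A = v2 ` {1..<i}" unfolding A_def
      proof (rule image_cong[OF refl])
        fix k assume "k \<in> {1..<i}" then show "v1 k = v2 k" using IH i by simp
      qed
      have n1: "v1 i \<notin> A"
      proof
        assume "v1 i \<in> A" then obtain k where "k \<in> {1..<i}" "v1 i = v1 k" unfolding A_def by blast
        then show False using injD[OF permutes_inj[OF v1]] by fastforce
      qed
      have n2: "v2 i \<notin> A"
      proof
        assume "v2 i \<in> A" then obtain k where "k \<in> {1..<i}" "v2 i = v2 k" unfolding A2 by blast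
        then show False using injD[OF permutes_inj[OF v2]] by fastforce
      qed
      have g1: "1 \<le> v1 i" "1 \<le> v2 i" using i permutes_in_image[OF v1] permutes_in_image[OF v2] by auto
      have eq: "card ({1..<v1 i} - A) = card ({1..<v2 i} - A)"
        using rows[OF i] row_diagram[OF v1 i] row_diagram[OF v2 i] A2 unfolding A_def by simp
      have mono: "card ({1..<x} - A) < card ({1..<y} - A)" if "x < y" "x \<notin> A" "1 \<le> x" for x y
      proof (rule psubset_card_mono)
        show "finite ({1..<y} - A)" by simp
        show "{1..<x} - A \<subset> {1..<y} - A" using that by auto
      qed
      show "v1 i = v2 i"
      proof (rule ccontr)
        assume "v1 i \<noteq> v2 i"
        then consider "v1 i < v2 i" | "v2 i < v1 i" by linarith
        then show False
        proof cases
          case 1 then show False using mono[OF 1 n1 g1(1)] eq by simp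
        next
          case 2 then show False using mono[OF 2 n2 g1(2)] eq by simp
        qed
      qed
    qed
  qed
  then show ?thesis
  proof (intro ext)
    fix x assume H: "\<forall>i. 1 \<le> i \<longrightarrow> i \<le> n \<longrightarrow> v1 i = v2 i"
    show "v1 x = v2 x"
    proof (cases "x \<in> {1..n}")
      case True then show ?thesis using H by auto
    next
      case False then show ?thesis using permutes_not_in[OF v1] permutes_not_in[OF v2] by simp
    qed
  qed
qed

definition rc :: "(nat \<times> nat) set \<Rightarrow> labeling \<Rightarrow> nat \<Rightarrow> nat \<Rightarrow> (int \<Rightarrow> bool) \<Rightarrow> nat" where
  "rc D T i c P = card {c'. (i, c') \<in> D \<and> c < c' \<and> P (T i c')}"

definition cc :: "(nat \<times> nat) set \<Rightarrow> labeling \<Rightarrow> nat \<Rightarrow> nat \<Rightarrow> (int \<Rightarrow> bool) \<Rightarrow> nat" where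
  "cc D T i c P = card {k. (k, c) \<in> D \<and> i < k \<and> P (T k c)}"

definition bal2 :: "(nat \<times> nat) set \<Rightarrow> labeling \<Rightarrow> nat \<Rightarrow> nat \<Rightarrow> bool" where
  "bal2 D T i c \<longleftrightarrow> cc D T i c (\<lambda>x. x < T i c) \<le> rc D T i c (\<lambda>x. T i c \<le> x) \<and>
                       rc D T i c (\<lambda>x. T i c < x) \<le> cc D T i c (\<lambda>x. x \<le> T i c)"

lemma cnt_row: "cnt (hook_row D (i, c)) T P = rc D T i c P"
proof -
  have "{p \<in> hook_row D (i, c). P (T (fst p) (snd p))} = (\<lambda>c'. (i, c')) ` {c'. (i, c') \<in> D \<and> c < c' \<and> P (T i c')}"
    unfolding hook_row_def by auto
  moreover have "inj_on (\<lambda>c'. (i, c')) X" for X :: "nat set" by (auto simp: inj_on_def)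
  ultimately show ?thesis unfolding cnt_def rc_def by (simp add: card_image)
qed

lemma cnt_col: "cnt (hook_col D (i, c)) T P = cc D T i c P"
proof -
  have "{p \<in> hook_col D (i, c). P (T (fst p) (snd p))} = (\<lambda>k. (k, c)) ` {k. (k, c) \<in> D \<and> i < k \<and> P (T k c)}"
    unfolding hook_col_def by auto
  moreover have "inj_on (\<lambda>k. (k, c)) X" for X :: "nat set" by (auto simp: inj_on_def)
  ultimately show ?thesis unfolding cnt_def cc_def by (simp add: card_image)
qed

lemma bal2_iff:
  assumes "finite D" "(i, c) \<in> D"
  shows "balanced_hook D T (i, c) \<longleftrightarrow> bal2 D T i c"
  unfolding balanced_iff[OF assms] balc_def bal2_def cnt_row cnt_col by simp

lemma fin_rowset: "finite D \<Longrightarrow> finite {c'. (i, c') \<in> D \<and> Q c'}"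
proof (rule finite_subset[of _ "snd ` D"])
  show "{c'. (i, c') \<in> D \<and> Q c'} \<subseteq> snd ` D"
  proof
    fix x assume "x \<in> {c'. (i, c') \<in> D \<and> Q c'}"
    then have "(i, x) \<in> D" by simp
    then show "x \<in> snd ` D" by (metis imageI snd_conv)
  qed
qed simp

lemma fin_colset: "finite D \<Longrightarrow> finite {k. (k, c) \<in> D \<and> Q k}"
proof (rule finite_subset[of _ "fst ` D"])
  show "{k. (k, c) \<in> D \<and> Q k} \<subseteq> fst ` D"
  proof
    fix x assume "x \<in> {k. (k, c) \<in> D \<and> Q k}"
    then have "(x, c) \<in> D" by simp
    then show "x \<in> fst ` D" by (metis imageI fst_conv)
  qed
qed simp

lemma card_sw: "card {c. Q c} = card {c. Q (sw r c)}"
proof -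
  have "{c. Q c} = sw r ` {c. Q (sw r c)}" by (auto simp: image_iff) (metis sw_sw)
  moreover have "inj_on (sw r) X" for X by (auto simp: inj_on_def sw_eq_iff)
  ultimately show ?thesis by (simp add: card_image)
qed

lemma card_plus_one:
  assumes "finite A" "a \<notin> A"
  shows "card {x. x \<in> A \<or> (x = a \<and> R)} = card A + (if R then 1 else 0)"
proof (cases R)
  case True
  then have "{x. x \<in> A \<or> (x = a \<and> R)} = insert a A" by auto
  then show ?thesis using assms True by simp
next
  case False then show ?thesis by simp
qed

lemma card_mono_pred:
  assumes "finite {x. Q x}" "\<And>x. P x \<Longrightarrow> Q x"
  shows "card {x. P x} \<le> card {x. Q x}"
  by (rule card_mono[OF assms(1)]) (use assms(2) in auto)

lemma card_plus_one':
  assumes "finite A" "R \<Longrightarrow> a \<notin> A"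
  shows "card {x. x \<in> A \<or> (x = a \<and> R)} = card A + (if R then 1 else 0)"
proof (cases R)
  case True
  then have "{x. x \<in> A \<or> (x = a \<and> R)} = insert a A" by auto
  then show ?thesis using assms True by simp
next
  case False then show ?thesis by simp
qed

lemma rc_mono: "finite D \<Longrightarrow> (\<And>v. P v \<Longrightarrow> Q v) \<Longrightarrow> rc D T i c P \<le> rc D T i c Q"
  unfolding rc_def by (rule card_mono_pred) (auto intro: fin_rowset)

lemma cc_mono: "finite D \<Longrightarrow> (\<And>v. P v \<Longrightarrow> Q v) \<Longrightarrow> cc D T i c P \<le> cc D T i c Q"
  unfolding cc_def by (rule card_mono_pred) (auto intro: fin_colset)

lemma sw_less_lo: "c < r \<Longrightarrow> (c < sw r x \<longleftrightarrow> c < x)"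
  by (auto simp: sw_cases)
lemma sw_less_hi: "Suc r < c \<Longrightarrow> (c < sw r x \<longleftrightarrow> c < x)"
  by (auto simp: sw_cases)
lemma sw_less_r: "(r < sw r x \<longleftrightarrow> x = r \<or> Suc r < x)"
  by (auto simp: sw_cases)
lemma sw_less_r1: "(Suc r < sw r x \<longleftrightarrow> Suc r < x)"
  by (auto simp: sw_cases)

locale swp =
  fixes n :: nat and w' :: "nat \<Rightarrow> nat" and r :: nat and t :: int and T T' :: labeling
  assumes w': "w' permutes {1..n}" and r1: "1 \<le> r" and r2: "Suc r \<le> n"
    and asc: "inv w' r < inv w' (Suc r)"
    and TT: "\<And>i j. T i j = (if i = inv w' r \<and> j = r then t else T' i (sw r j))"
begin

abbreviation "p1 \<equiv> inv w' r"
abbreviation "p2 \<equiv> inv w' (Suc r)"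
abbreviation "D \<equiv> diagram n (sw r \<circ> w')"
abbreviation "D' \<equiv> diagram n w'"

definition S :: "nat \<Rightarrow> bool" where "S k \<longleftrightarrow> 1 \<le> k \<and> k < p1 \<and> Suc r < w' k"

lemma w: "sw r \<circ> w' permutes {1..n}" by (rule permutes_compose[OF w' sw_permutes[OF r1 r2]])

lemma memD: "(i, c) \<in> D \<longleftrightarrow> (i, sw r c) \<in> D' \<or> (i = p1 \<and> c = r)"
  using swap_diagram[OF w' r1 r2 asc] by simp

lemma wp1: "w' p1 = r" and wp2: "w' p2 = Suc r" using permutes_inverses[OF w'] by auto

lemma wk_eq: "w' k = r \<longleftrightarrow> k = p1" "w' k = Suc r \<longleftrightarrow> k = p2"
  using permutes_inverses[OF w'] by metis+

lemma memD'_r: "(k, r) \<in> D' \<longleftrightarrow> S k"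
proof -
  have "(k, r) \<in> D' \<longleftrightarrow> 1 \<le> k \<and> k < p1 \<and> r < w' k"
    unfolding diagram_iff[OF w'] using r1 r2 by auto
  moreover have "k < p1 \<Longrightarrow> w' k \<noteq> Suc r" using wk_eq(2)[of k] asc by auto
  ultimately show ?thesis unfolding S_def by (auto simp: Suc_lessI)
qed

lemma memD'_r1: "(k, Suc r) \<in> D' \<longleftrightarrow> 1 \<le> k \<and> k < p2 \<and> Suc r < w' k"
  unfolding diagram_iff[OF w'] using r1 r2 by auto

lemma S_both: "S k \<Longrightarrow> (k, Suc r) \<in> D'"
  unfolding memD'_r1 S_def using asc by auto

lemma not_p1_r1: "(p1, Suc r) \<notin> D'" by (rule not_in_swapped[OF w'])

lemma row_p1: "(p1, c) \<in> D' \<Longrightarrow> c < r"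
  unfolding diagram_iff[OF w'] using wp1 by auto

lemma fD: "finite D" and fD': "finite D'" by simp_all

lemma Tsw: "T i (sw r c) = (if i = p1 \<and> c = Suc r then t else T' i c)"
  using TT[of i "sw r c"] by (auto simp: sw_cases split: if_splits)

lemma memDsw: "(i, sw r c) \<in> D \<longleftrightarrow> (i, c) \<in> D' \<or> (i = p1 \<and> c = Suc r)"
  using memD[of i "sw r c"] by (auto simp: sw_cases split: if_splits)

lemma rc_sw: "rc D T i c P = card {c''. ((i, c'') \<in> D' \<or> (i = p1 \<and> c'' = Suc r)) \<and> c < sw r c'' \<and>
    P (if i = p1 \<and> c'' = Suc r then t else T' i c'')}"
  unfolding rc_def by (subst card_sw[of _ r]) (simp add: memDsw Tsw)

lemma T1: "c \<noteq> r \<Longrightarrow> c \<noteq> Suc r \<Longrightarrow> cc D T i c P = cc D' T' i c P"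
  unfolding cc_def by (rule arg_cong[where f=card], rule Collect_cong) (simp add: memD TT)

lemma T2: "Suc r < c \<Longrightarrow> rc D T i c P = rc D' T' i c P"
  unfolding rc_sw unfolding rc_def
  by (rule arg_cong[where f=card], rule Collect_cong) (auto simp: sw_less_hi)

lemma T3: "c < r \<Longrightarrow> rc D T i c P = rc D' T' i c P + (if i = p1 \<and> P t then 1 else 0)"
proof -
  assume c: "c < r"
  have "rc D T i c P = card {c''. c'' \<in> {c'. (i, c') \<in> D' \<and> c < c' \<and> P (T' i c')} \<or> (c'' = Suc r \<and> (i = p1 \<and> P t))}"
    unfolding rc_sw by (rule arg_cong[where f=card], rule Collect_cong) (use c not_p1_r1 in \<open>auto simp: sw_less_lo\<close>)
  also have "\<dots> = rc D' T' i c P + (if i = p1 \<and> P t then 1 else 0)"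
    unfolding rc_def by (rule card_plus_one') (use not_p1_r1 in \<open>auto intro: fin_rowset\<close>)
  finally show ?thesis .
qed

lemma T4: "rc D T i (Suc r) P = rc D' T' i (Suc r) P"
  unfolding rc_sw unfolding rc_def
  by (rule arg_cong[where f=card], rule Collect_cong) (auto simp: sw_less_r1)

lemma T5: "cc D T i (Suc r) P = cc D' T' i r P"
  unfolding cc_def by (rule arg_cong[where f=card], rule Collect_cong) (simp add: memD TT)

lemma T6: "rc D T i r P = rc D' T' i (Suc r) P + (if (i, r) \<in> D' \<and> P (T' i r) then 1 else 0)"
proof -
  have "rc D T i r P = card {c''. c'' \<in> {c'. (i, c') \<in> D' \<and> Suc r < c' \<and> P (T' i c')} \<or> (c'' = r \<and> ((i, r) \<in> D' \<and> P (T' i r)))}"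
    unfolding rc_sw by (rule arg_cong[where f=card], rule Collect_cong) (auto simp: sw_less_r)
  also have "\<dots> = rc D' T' i (Suc r) P + (if (i, r) \<in> D' \<and> P (T' i r) then 1 else 0)"
    unfolding rc_def by (rule card_plus_one') (auto intro: fin_rowset)
  finally show ?thesis .
qed

lemma T7: "cc D T i r P = cc D' T' i (Suc r) P + (if i < p1 \<and> P t then 1 else 0)"
proof -
  have "cc D T i r P = card {k. k \<in> {k. (k, Suc r) \<in> D' \<and> i < k \<and> P (T' k (Suc r))} \<or> (k = p1 \<and> (i < p1 \<and> P t))}"
    unfolding cc_def by (rule arg_cong[where f=card], rule Collect_cong) (use not_p1_r1 in \<open>auto simp: memD TT\<close>)
  also have "\<dots> = cc D' T' i (Suc r) P + (if i < p1 \<and> P t then 1 else 0)"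
    unfolding cc_def by (rule card_plus_one') (use not_p1_r1 in \<open>auto intro: fin_colset\<close>)
  finally show ?thesis .
qed

lemma T8: "(i, Suc r) \<in> D' \<Longrightarrow> rc D' T' i r P = rc D' T' i (Suc r) P + (if P (T' i (Suc r)) then 1 else 0)"
proof -
  assume h: "(i, Suc r) \<in> D'"
  have "rc D' T' i r P = card {c''. c'' \<in> {c'. (i, c') \<in> D' \<and> Suc r < c' \<and> P (T' i c')} \<or> (c'' = Suc r \<and> P (T' i (Suc r)))}"
    unfolding rc_def
  proof (rule arg_cong[where f=card], rule Collect_cong)
    fix c' show "((i, c') \<in> D' \<and> r < c' \<and> P (T' i c')) = (c' \<in> {c'. (i, c') \<in> D' \<and> Suc r < c' \<and> P (T' i c')} \<or> c' = Suc r \<and> P (T' i (Suc r)))"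
      by (cases "c' = Suc r") (use h in auto)
  qed
  also have "\<dots> = rc D' T' i (Suc r) P + (if P (T' i (Suc r)) then 1 else 0)"
    unfolding rc_def by (rule card_plus_one') (auto intro: fin_rowset)
  finally show ?thesis .
qed

lemma fin_S: "finite {k. S k \<and> Q k}"
  by (rule finite_subset[of _ "{..<p1}"]) (auto simp: S_def)

lemma T9: "cc D' T' i r P = card {k. S k \<and> i < k \<and> P (T' k r)}"
  unfolding cc_def memD'_r by simp

lemma T10: "card {k. S k \<and> i < k \<and> P (T' k (Suc r))} \<le> cc D' T' i (Suc r) P"
  unfolding cc_def by (rule card_mono_pred) (auto intro: fin_colset S_both)

lemma T11: "rc D T p1 r P = 0"
proof -
  have "{c'. (p1, c') \<in> D \<and> r < c' \<and> P (T p1 c')} = {}"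
  proof (rule ccontr)
    assume "{c'. (p1, c') \<in> D \<and> r < c' \<and> P (T p1 c')} \<noteq> {}"
    then obtain c' where c': "(p1, c') \<in> D" "r < c'" by auto
    then have "(p1, sw r c') \<in> D'" using memD by auto
    then have "sw r c' < r" by (rule row_p1)
    then show False using c' by (auto simp: sw_cases split: if_splits)
  qed
  then show ?thesis unfolding rc_def by (metis card.empty)
qed

end

context swp begin

lemma S_lt: "S k \<Longrightarrow> k < p1" unfolding S_def by simp

lemma in_D_r1: "(i, Suc r) \<in> D \<longleftrightarrow> S i"
  using memD[of i "Suc r"] memD'_r by simp

lemma in_D_r: "(i, r) \<in> D \<longleftrightarrow> (i, Suc r) \<in> D' \<or> i = p1"
  using memD[of i r] by simp

lemma T_r1: "T i (Suc r) = T' i r" using TT[of i "Suc r"] by simp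
lemma T_r: "i \<noteq> p1 \<Longrightarrow> T i r = T' i (Suc r)" using TT[of i r] by simp
lemma T_p1: "T p1 r = t" using TT by simp
lemma T_other: "c \<noteq> r \<Longrightarrow> c \<noteq> Suc r \<Longrightarrow> T i c = T' i c" using TT[of i c] by simp

lemma bal2_unf:
  assumes "bal2 X U i c" "U i c = y"
  shows "cc X U i c (\<lambda>x. x < y) \<le> rc X U i c (\<lambda>x. y \<le> x)"
        "rc X U i c (\<lambda>x. y < x) \<le> cc X U i c (\<lambda>x. x \<le> y)"
  using assms unfolding bal2_def by auto

lemma bal2_fold:
  assumes "U i c = y" "cc X U i c (\<lambda>x. x < y) \<le> rc X U i c (\<lambda>x. y \<le> x)"
        "rc X U i c (\<lambda>x. y < x) \<le> cc X U i c (\<lambda>x. x \<le> y)"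
  shows "bal2 X U i c"
  using assms unfolding bal2_def by auto

lemma K:
  assumes balD': "\<And>i c. (i, c) \<in> D' \<Longrightarrow> bal2 D' T' i c"
  shows "S i \<Longrightarrow> T' i (Suc r) \<le> T' i r"
proof (induction "p1 - i" arbitrary: i rule: less_induct)
  case less
  note Si = less.prems
  note IH = less.hyps
  have IH': "\<And>k. S k \<Longrightarrow> i < k \<Longrightarrow> T' k (Suc r) \<le> T' k r"
  proof -
    fix k assume k: "S k" "i < k"
    have "p1 - k < p1 - i" using S_lt[OF k(1)] k(2) by arith
    then show "T' k (Suc r) \<le> T' k r" using IH k(1) by blast
  qed
  define x where "x = T' i (Suc r)"
  define y where "y = T' i r"
  show ?case
  proof (rule ccontr)
    assume "\<not> T' i (Suc r) \<le> T' i r"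
    then have yx: "y < x" unfolding x_def y_def by simp
    have b1: "bal2 D' T' i r" using balD' Si memD'_r by simp
    have b2: "bal2 D' T' i (Suc r)" using balD' Si S_both by simp
    have e1: "rc D' T' i r (\<lambda>v. y < v) = rc D' T' i (Suc r) (\<lambda>v. y < v) + 1"
      using T8[OF S_both[OF Si], of "\<lambda>v. y < v"] yx unfolding x_def by simp
    have i1: "rc D' T' i r (\<lambda>v. y < v) \<le> cc D' T' i r (\<lambda>v. v \<le> y)"
      using bal2_unf(2)[OF b1] y_def by simp
    have i2: "cc D' T' i r (\<lambda>v. v \<le> y) \<le> card {k. S k \<and> i < k \<and> T' k (Suc r) \<le> y}"
      unfolding T9 by (rule card_mono_pred[OF fin_S]) (use IH' in fastforce)
    have i3: "card {k. S k \<and> i < k \<and> T' k (Suc r) \<le> y} \<le> cc D' T' i (Suc r) (\<lambda>v. v \<le> y)"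
      by (rule T10)
    have i4: "cc D' T' i (Suc r) (\<lambda>v. v \<le> y) \<le> cc D' T' i (Suc r) (\<lambda>v. v < x)"
      by (rule cc_mono[OF fD']) (use yx in auto)
    have i5: "cc D' T' i (Suc r) (\<lambda>v. v < x) \<le> rc D' T' i (Suc r) (\<lambda>v. x \<le> v)"
      using bal2_unf(1)[OF b2] x_def by simp
    have i6: "rc D' T' i (Suc r) (\<lambda>v. x \<le> v) \<le> rc D' T' i (Suc r) (\<lambda>v. y < v)"
      by (rule rc_mono[OF fD']) (use yx in auto)
    show False using e1 i1 i2 i3 i4 i5 i6 by linarith
  qed
qed

lemma K':
  assumes balD: "\<And>i c. (i, c) \<in> D \<Longrightarrow> bal2 D T i c"
    and tmin: "\<And>i c. (i, c) \<in> D \<Longrightarrow> t \<le> T i c"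
  shows "S i \<Longrightarrow> T' i (Suc r) \<le> T' i r"
proof (induction "p1 - i" arbitrary: i rule: less_induct)
  case less
  note Si = less.prems
  note IH = less.hyps
  have IH': "\<And>k. S k \<Longrightarrow> i < k \<Longrightarrow> T' k (Suc r) \<le> T' k r"
  proof -
    fix k assume k: "S k" "i < k"
    have "p1 - k < p1 - i" using S_lt[OF k(1)] k(2) by arith
    then show "T' k (Suc r) \<le> T' k r" using IH k(1) by blast
  qed
  define x where "x = T' i (Suc r)"
  define y where "y = T' i r"
  have ip: "i \<noteq> p1" "i < p1" using S_lt[OF Si] by auto
  show ?case
  proof (rule ccontr)
    assume "\<not> T' i (Suc r) \<le> T' i r"
    then have yx: "y < x" unfolding x_def y_def by simp
    have inr1: "(i, Suc r) \<in> D" using in_D_r1 Si by simp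
    have inr: "(i, r) \<in> D" using in_D_r S_both[OF Si] by simp
    have vr1: "T i (Suc r) = y" using T_r1 y_def by simp
    have vr: "T i r = x" using T_r[OF ip(1)] x_def by simp
    have ty: "t \<le> y" using tmin[OF inr1] vr1 by simp
    have b1: "bal2 D T i (Suc r)" using balD[OF inr1] .
    have b2: "bal2 D T i r" using balD[OF inr] .
    have i1: "rc D' T' i (Suc r) (\<lambda>v. y < v) \<le> cc D' T' i r (\<lambda>v. v \<le> y)"
      using bal2_unf(2)[OF b1 vr1] T4 T5 by simp
    have i2: "cc D' T' i r (\<lambda>v. v \<le> y) \<le> card {k. S k \<and> i < k \<and> T' k (Suc r) \<le> y}"
      unfolding T9 by (rule card_mono_pred[OF fin_S]) (use IH' in fastforce)
    have i3: "card {k. S k \<and> i < k \<and> T' k (Suc r) \<le> y} \<le> cc D' T' i (Suc r) (\<lambda>v. v \<le> y)"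
      by (rule T10)
    have i4: "cc D' T' i (Suc r) (\<lambda>v. v \<le> y) \<le> cc D' T' i (Suc r) (\<lambda>v. v < x)"
      by (rule cc_mono[OF fD']) (use yx in auto)
    have i5: "cc D' T' i (Suc r) (\<lambda>v. v < x) + 1 \<le> rc D' T' i (Suc r) (\<lambda>v. x \<le> v)"
      using bal2_unf(1)[OF b2 vr] T6[of i "\<lambda>v. x \<le> v"] T7[of i "\<lambda>v. v < x"] ip ty yx y_def
      by simp
    have i6: "rc D' T' i (Suc r) (\<lambda>v. x \<le> v) \<le> rc D' T' i (Suc r) (\<lambda>v. y < v)"
      by (rule rc_mono[OF fD']) (use yx in auto)
    show False using i1 i2 i3 i4 i5 i6 by linarith
  qed
qed

end

lemma cc_zero:
  assumes "\<And>k c. (k, c) \<in> X \<Longrightarrow> t \<le> U k c"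
  shows "cc X U i c (\<lambda>v. v < t) = 0"
proof -
  have "{k. (k, c) \<in> X \<and> i < k \<and> U k c < t} = {}" using assms by force
  then show ?thesis unfolding cc_def by (metis card.empty)
qed

context swp begin

lemma S_of: "(i, Suc r) \<in> D' \<Longrightarrow> i < p1 \<Longrightarrow> S i"
  unfolding memD'_r1 S_def by auto

lemma inD'_of_D: "(i, c) \<in> D \<Longrightarrow> (i, c) \<noteq> (p1, r) \<Longrightarrow> (i, sw r c) \<in> D'"
  using memD by auto

lemma inD_of_D': "(i, c) \<in> D' \<Longrightarrow> (i, sw r c) \<in> D"
  using memD[of i "sw r c"] by simp

lemma tmin_D_of_D':
  assumes "\<And>i c. (i, c) \<in> D' \<Longrightarrow> t \<le> T' i c"
  shows "(i, c) \<in> D \<Longrightarrow> t \<le> T i c"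
proof -
  assume h: "(i, c) \<in> D"
  show "t \<le> T i c"
  proof (cases "i = p1 \<and> c = r")
    case True then show ?thesis using T_p1 by simp
  next
    case False
    then have "(i, sw r c) \<in> D'" using inD'_of_D[OF h] by auto
    then show ?thesis using assms TT[of i c] False by simp
  qed
qed

lemma tmin_D'_of_D:
  assumes "\<And>i c. (i, c) \<in> D \<Longrightarrow> t \<le> T i c"
  shows "(i, c) \<in> D' \<Longrightarrow> t \<le> T' i c"
proof -
  assume h: "(i, c) \<in> D'"
  have "(i, sw r c) \<in> D" by (rule inD_of_D'[OF h])
  moreover have "\<not> (i = p1 \<and> c = Suc r)" using h not_p1_r1 by auto
  ultimately have "t \<le> T i (sw r c)" "\<not> (i = p1 \<and> c = Suc r)" using assms by auto
  then show "t \<le> T' i c" using Tsw[of i c] by simp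
qed

lemma L2_bal:
  assumes balD': "\<And>i c. (i, c) \<in> D' \<Longrightarrow> bal2 D' T' i c"
    and tmin': "\<And>i c. (i, c) \<in> D' \<Longrightarrow> t \<le> T' i c"
    and inD: "(i, c) \<in> D"
  shows "bal2 D T i c"
proof -
  have tmin: "\<And>i c. (i, c) \<in> D \<Longrightarrow> t \<le> T i c" using tmin_D_of_D'[OF tmin'] .
  have Kl: "\<And>k. S k \<Longrightarrow> T' k (Suc r) \<le> T' k r" using K[OF balD'] .
  consider "i = p1 \<and> c = r" | "Suc r < c" | "c < r" | "c = Suc r" | "c = r \<and> i \<noteq> p1" by linarith
  then show ?thesis
  proof cases
    case 1
    then show ?thesis using cc_zero[OF tmin, where i=i and c=c] T11 T_p1 unfolding bal2_def by simp
  next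
    case 2
    then have "(i, c) \<in> D'" using inD'_of_D[OF inD] by auto
    moreover have "T i c = T' i c" using T_other 2 by simp
    ultimately show ?thesis using balD' T1[of c i] T2[OF 2] 2 unfolding bal2_def by simp
  next
    case 3
    then have inD': "(i, c) \<in> D'" using inD'_of_D[OF inD] by auto
    define y where "y = T' i c"
    have vy: "T i c = y" using T_other 3 y_def by simp
    have ty: "t \<le> y" using tmin' inD' y_def by simp
    have a1: "cc D' T' i c (\<lambda>v. v < y) \<le> rc D' T' i c (\<lambda>v. y \<le> v)"
      and a2: "rc D' T' i c (\<lambda>v. y < v) \<le> cc D' T' i c (\<lambda>v. v \<le> y)"
      using bal2_unf[OF balD'[OF inD'] y_def[symmetric]] by auto
    show ?thesis
    proof (rule bal2_fold[where U=T and i=i, OF vy])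
      show "cc D T i c (\<lambda>x. x < y) \<le> rc D T i c (\<lambda>x. y \<le> x)"
        using a1 T1[of c i] T3[OF 3] 3 by simp
      show "rc D T i c (\<lambda>x. y < x) \<le> cc D T i c (\<lambda>x. x \<le> y)"
        using a2 T1[of c i] T3[OF 3, of i "\<lambda>x. y < x"] 3 ty by simp
    qed
  next
    case 4
    then have Si: "S i" using in_D_r1 inD by simp
    have inr: "(i, r) \<in> D'" using Si memD'_r by simp
    have inr1: "(i, Suc r) \<in> D'" using S_both[OF Si] .
    define y where "y = T' i r"
    define x where "x = T' i (Suc r)"
    have vy: "T i (Suc r) = y" using T_r1 y_def by simp
    have xy: "x \<le> y" using Kl[OF Si] x_def y_def by simp
    have a1: "cc D' T' i r (\<lambda>v. v < y) \<le> rc D' T' i r (\<lambda>v. y \<le> v)"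
      and a2: "rc D' T' i r (\<lambda>v. y < v) \<le> cc D' T' i r (\<lambda>v. v \<le> y)"
      using bal2_unf[OF balD'[OF inr] y_def[symmetric]] by auto
    have e1: "rc D' T' i r (\<lambda>v. y \<le> v) = rc D' T' i (Suc r) (\<lambda>v. y \<le> v) + (if y \<le> x then 1 else 0)"
      using T8[OF inr1] x_def by simp
    have e2: "rc D' T' i r (\<lambda>v. y < v) = rc D' T' i (Suc r) (\<lambda>v. y < v) + (if y < x then 1 else 0)"
      using T8[OF inr1] x_def by simp
    show ?thesis unfolding 4
    proof (rule bal2_fold[where U=T and i=i, OF vy])
      show "rc D T i (Suc r) (\<lambda>v. y < v) \<le> cc D T i (Suc r) (\<lambda>v. v \<le> y)"
        using a2 e2 T4 T5 by simp
      show "cc D T i (Suc r) (\<lambda>v. v < y) \<le> rc D T i (Suc r) (\<lambda>v. y \<le> v)"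
      proof (cases "x < y")
        case True then show ?thesis using a1 e1 T4 T5 by simp
      next
        case False
        then have xy': "x = y" using xy by simp
        have b1: "cc D' T' i r (\<lambda>v. v < y) \<le> card {k. S k \<and> i < k \<and> T' k (Suc r) < y}"
          unfolding T9 by (rule card_mono_pred[OF fin_S]) (use Kl in fastforce)
        have b2: "card {k. S k \<and> i < k \<and> T' k (Suc r) < y} \<le> cc D' T' i (Suc r) (\<lambda>v. v < y)"
          by (rule T10)
        have b3: "cc D' T' i (Suc r) (\<lambda>v. v < y) \<le> rc D' T' i (Suc r) (\<lambda>v. y \<le> v)"
          using bal2_unf(1)[OF balD'[OF inr1]] x_def xy' by simp
        show ?thesis using b1 b2 b3 T4 T5 by simp
      qed
    qed
  next
    case 5
    then have inr1: "(i, Suc r) \<in> D'" using in_D_r inD by simp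
    define y where "y = T' i (Suc r)"
    have vy: "T i r = y" using T_r 5 y_def by simp
    have ty: "t \<le> y" using tmin' inr1 y_def by simp
    have a1: "cc D' T' i (Suc r) (\<lambda>v. v < y) \<le> rc D' T' i (Suc r) (\<lambda>v. y \<le> v)"
      and a2: "rc D' T' i (Suc r) (\<lambda>v. y < v) \<le> cc D' T' i (Suc r) (\<lambda>v. v \<le> y)"
      using bal2_unf[OF balD'[OF inr1] y_def[symmetric]] by auto
    show ?thesis unfolding 5[THEN conjunct1]
    proof (rule bal2_fold[where U=T and i=i, OF vy])
      show "cc D T i r (\<lambda>v. v < y) \<le> rc D T i r (\<lambda>v. y \<le> v)"
      proof (cases "S i")
        case True
        then have "(i, r) \<in> D'" "i < p1" "y \<le> T' i r" using memD'_r S_lt Kl y_def by auto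
        then show ?thesis using a1 T6[of i "\<lambda>v. y \<le> v"] T7[of i "\<lambda>v. v < y"] by simp
      next
        case False
        then have "(i, r) \<notin> D'" "\<not> i < p1" using memD'_r S_of[OF inr1] by auto
        then show ?thesis using a1 T6[of i "\<lambda>v. y \<le> v"] T7[of i "\<lambda>v. v < y"] by simp
      qed
      show "rc D T i r (\<lambda>v. y < v) \<le> cc D T i r (\<lambda>v. v \<le> y)"
      proof (cases "S i")
        case True
        then have "(i, r) \<in> D'" "i < p1" using memD'_r S_lt by auto
        then show ?thesis using a2 ty T6[of i "\<lambda>v. y < v"] T7[of i "\<lambda>v. v \<le> y"] by simp
      next
        case False
        then have "(i, r) \<notin> D'" "\<not> i < p1" using memD'_r S_of[OF inr1] by auto
        then show ?thesis using a2 T6[of i "\<lambda>v. y < v"] T7[of i "\<lambda>v. v \<le> y"] by simp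
      qed
    qed
  qed
qed

lemma L1_bal:
  assumes balD: "\<And>i c. (i, c) \<in> D \<Longrightarrow> bal2 D T i c"
    and tmin: "\<And>i c. (i, c) \<in> D \<Longrightarrow> t \<le> T i c"
    and rowne: "\<And>c. (p1, c) \<in> D' \<Longrightarrow> T' p1 c \<noteq> t"
    and inD': "(i, c) \<in> D'"
  shows "bal2 D' T' i c"
proof -
  have tmin': "\<And>i c. (i, c) \<in> D' \<Longrightarrow> t \<le> T' i c" using tmin_D'_of_D[OF tmin] .
  have Kl: "\<And>k. S k \<Longrightarrow> T' k (Suc r) \<le> T' k r" using K'[OF balD tmin] .
  have inD0: "(i, sw r c) \<in> D" using inD_of_D'[OF inD'] .
  consider "Suc r < c" | "c < r" | "c = r" | "c = Suc r" by linarith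
  then show ?thesis
  proof cases
    case 1
    then have inD: "(i, c) \<in> D" using inD0 by simp
    have vy: "T i c = T' i c" using T_other 1 by simp
    show ?thesis
      using bal2_unf[OF balD[OF inD] vy] T1[of c i] T2[OF 1] 1 unfolding bal2_def by simp
  next
    case 2
    then have inD: "(i, c) \<in> D" using inD0 by (simp add: sw_cases)
    define y where "y = T' i c"
    have vy: "T i c = y" using T_other 2 y_def by simp
    have ty: "i = p1 \<Longrightarrow> t < y" using tmin'[OF inD'] rowne inD' y_def by fastforce
    have a1: "cc D T i c (\<lambda>v. v < y) \<le> rc D T i c (\<lambda>v. y \<le> v)"
      and a2: "rc D T i c (\<lambda>v. y < v) \<le> cc D T i c (\<lambda>v. v \<le> y)"
      using bal2_unf[OF balD[OF inD] vy] by auto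
    show ?thesis
    proof (rule bal2_fold[where U=T' and i=i, OF y_def[symmetric]])
      show "cc D' T' i c (\<lambda>x. x < y) \<le> rc D' T' i c (\<lambda>x. y \<le> x)"
        using a1 T1[of c i] T3[OF 2, of i "\<lambda>x. y \<le> x"] 2 ty by (cases "i = p1") auto
      show "rc D' T' i c (\<lambda>x. y < x) \<le> cc D' T' i c (\<lambda>x. x \<le> y)"
        using a2 T1[of c i] T3[OF 2, of i "\<lambda>x. y < x"] 2 by simp
    qed
  next
    case 3
    then have Si: "S i" using memD'_r inD' by simp
    have inr1: "(i, Suc r) \<in> D'" using S_both[OF Si] .
    have inDr1: "(i, Suc r) \<in> D" using in_D_r1 Si by simp
    define y where "y = T' i r"
    define x where "x = T' i (Suc r)"
    have vy: "T i (Suc r) = y" using T_r1 y_def by simp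
    have xy: "x \<le> y" using Kl[OF Si] x_def y_def by simp
    have a1: "cc D' T' i r (\<lambda>v. v < y) \<le> rc D' T' i (Suc r) (\<lambda>v. y \<le> v)"
      and a2: "rc D' T' i (Suc r) (\<lambda>v. y < v) \<le> cc D' T' i r (\<lambda>v. v \<le> y)"
      using bal2_unf[OF balD[OF inDr1] vy] T4 T5 by auto
    have e1: "rc D' T' i r (\<lambda>v. y \<le> v) = rc D' T' i (Suc r) (\<lambda>v. y \<le> v) + (if y \<le> x then 1 else 0)"
      using T8[OF inr1] x_def by simp
    have e2: "rc D' T' i r (\<lambda>v. y < v) = rc D' T' i (Suc r) (\<lambda>v. y < v) + (if y < x then 1 else 0)"
      using T8[OF inr1] x_def by simp
    show ?thesis unfolding 3
    proof (rule bal2_fold[where U=T' and i=i, OF y_def[symmetric]])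
      show "cc D' T' i r (\<lambda>v. v < y) \<le> rc D' T' i r (\<lambda>v. y \<le> v)" using a1 e1 by simp
      show "rc D' T' i r (\<lambda>v. y < v) \<le> cc D' T' i r (\<lambda>v. v \<le> y)" using a2 e2 xy by simp
    qed
  next
    case 4
    have ip: "i \<noteq> p1" using inD' 4 not_p1_r1 by auto
    have inDr: "(i, r) \<in> D" using in_D_r inD' 4 by simp
    define y where "y = T' i (Suc r)"
    have vy: "T i r = y" using T_r[OF ip] y_def by simp
    have ty: "t \<le> y" using tmin[OF inDr] vy by simp
    have a1: "cc D T i r (\<lambda>v. v < y) \<le> rc D T i r (\<lambda>v. y \<le> v)"
      and a2: "rc D T i r (\<lambda>v. y < v) \<le> cc D T i r (\<lambda>v. v \<le> y)"
      using bal2_unf[OF balD[OF inDr] vy] by auto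
    show ?thesis unfolding 4
    proof (rule bal2_fold[where U=T' and i=i, OF y_def[symmetric]])
      show "cc D' T' i (Suc r) (\<lambda>v. v < y) \<le> rc D' T' i (Suc r) (\<lambda>v. y \<le> v)"
      proof (cases "S i")
        case True
        then have ii: "(i, r) \<in> D'" "i < p1" using memD'_r S_lt by auto
        show ?thesis
        proof (cases "t < y")
          case True
          then show ?thesis using a1 ii T6[of i "\<lambda>v. y \<le> v"] T7[of i "\<lambda>v. v < y"] by (auto split: if_splits)
        next
          case False
          then have "t = y" using ty by simp
          then show ?thesis using cc_zero[OF tmin', where i=i and c="Suc r"] by simp
        qed
      next
        case False
        then have "(i, r) \<notin> D'" "\<not> i < p1" using memD'_r S_of inD' 4 by auto
        then show ?thesis using a1 T6[of i "\<lambda>v. y \<le> v"] T7[of i "\<lambda>v. v < y"] by simp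
      qed
      show "rc D' T' i (Suc r) (\<lambda>v. y < v) \<le> cc D' T' i (Suc r) (\<lambda>v. v \<le> y)"
      proof (cases "S i")
        case True
        then have ii: "(i, r) \<in> D'" "i < p1" using memD'_r S_lt by auto
        define z where "z = T' i r"
        have yz: "y \<le> z" using Kl[OF True] y_def z_def by simp
        show ?thesis
        proof (cases "y < z")
          case True
          then show ?thesis using a2 ii ty z_def T6[of i "\<lambda>v. y < v"] T7[of i "\<lambda>v. v \<le> y"] by simp
        next
          case False
          then have zy: "z = y" using yz by simp
          have inDr1: "(i, Suc r) \<in> D" using in_D_r1 \<open>S i\<close> by simp
          have vz: "T i (Suc r) = y" using T_r1 z_def zy by simp
          have b0: "rc D' T' i (Suc r) (\<lambda>v. y < v) \<le> cc D' T' i r (\<lambda>v. v \<le> y)"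
            using bal2_unf(2)[OF balD[OF inDr1] vz] T4 T5 by simp
          have b1: "cc D' T' i r (\<lambda>v. v \<le> y) \<le> card {k. S k \<and> i < k \<and> T' k (Suc r) \<le> y}"
            unfolding T9 by (rule card_mono_pred[OF fin_S]) (use Kl in fastforce)
          have b2: "card {k. S k \<and> i < k \<and> T' k (Suc r) \<le> y} \<le> cc D' T' i (Suc r) (\<lambda>v. v \<le> y)"
            by (rule T10)
          show ?thesis using b0 b1 b2 by simp
        qed
      next
        case False
        then have "(i, r) \<notin> D'" "\<not> i < p1" using memD'_r S_of inD' 4 by auto
        then show ?thesis using a2 T6[of i "\<lambda>v. y < v"] T7[of i "\<lambda>v. v \<le> y"] by simp
      qed
    qed
  qed
qed

end

lemma is_BSL_alt:
  "is_BSL n w T \<longleftrightarrow>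
   (\<forall>i j. (i, j) \<notin> diagram n w \<longrightarrow> T i j = 0) \<and>
   (\<forall>i j. (i, j) \<in> diagram n w \<longrightarrow> T i j \<noteq> 0 \<and> - int j \<le> T i j \<and> T i j \<le> int i) \<and>
   (\<forall>i j. (i, j) \<in> diagram n w \<longrightarrow> bal2 (diagram n w) T i j) \<and>
   (\<forall>i j i'. (i, j) \<in> diagram n w \<and> (i', j) \<in> diagram n w \<and> i \<noteq> i' \<and> T i j = T i' j \<longrightarrow> T i j \<le> 0) \<and>
   (\<forall>i j j'. (i, j) \<in> diagram n w \<and> (i, j') \<in> diagram n w \<and> j \<noteq> j' \<and> T i j = T i j' \<longrightarrow> 0 \<le> T i j)"
proof -
  let ?D = "diagram n w"
  have b: "(\<forall>b\<in>?D. balanced_hook ?D T b) \<longleftrightarrow>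
           (\<forall>i j. (i, j) \<in> ?D \<longrightarrow> bal2 ?D T i j)"
    using bal2_iff[OF finite_diagram] by auto
  have f: "(\<forall>(i, j) \<in> ?D. T i j \<noteq> 0 \<and> - int j \<le> T i j \<and> T i j \<le> int i) \<longleftrightarrow>
     (\<forall>i j. (i, j) \<in> ?D \<longrightarrow> T i j \<noteq> 0 \<and> - int j \<le> T i j \<and> T i j \<le> int i)"
    by (auto simp: Ball_def)
  have c: "(\<forall>(i, j) \<in> ?D. \<forall>(i', j') \<in> ?D. (i, j) \<noteq> (i', j') \<and> j = j' \<and> T i j = T i' j' \<longrightarrow> \<not> is_unmarked (T i j)) \<longleftrightarrow>
     (\<forall>i j i'. (i, j) \<in> ?D \<and> (i', j) \<in> ?D \<and> i \<noteq> i' \<and> T i j = T i' j \<longrightarrow> T i j \<le> 0)"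
    unfolding is_unmarked_def not_less by (auto simp: Ball_def)
  have r: "(\<forall>(i, j) \<in> ?D. \<forall>(i', j') \<in> ?D. (i, j) \<noteq> (i', j') \<and> i = i' \<and> T i j = T i' j' \<longrightarrow> \<not> is_marked (T i j)) \<longleftrightarrow>
     (\<forall>i j j'. (i, j) \<in> ?D \<and> (i, j') \<in> ?D \<and> j \<noteq> j' \<and> T i j = T i j' \<longrightarrow> 0 \<le> T i j)"
    unfolding is_marked_def not_less by (auto simp: Ball_def)
  show ?thesis unfolding is_BSL_def b f c r by (rule refl)
qed

context swp begin

lemma BSL_L2:
  assumes B': "is_BSL n w' T'" and t0: "t < 0" and tr: "- int r \<le> t"
    and tmin': "\<And>i c. (i, c) \<in> D' \<Longrightarrow> t \<le> T' i c"
    and rowne: "\<And>c. (p1, c) \<in> D' \<Longrightarrow> T' p1 c \<noteq> t"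
  shows "is_BSL n (sw r \<circ> w') T"
proof -
  note B = B'[unfolded is_BSL_alt]
  have z: "\<And>i j. (i, j) \<notin> D' \<Longrightarrow> T' i j = 0" using B[THEN conjunct1] by blast
  have fl: "\<And>i j. (i, j) \<in> D' \<Longrightarrow> T' i j \<noteq> 0 \<and> - int j \<le> T' i j \<and> T' i j \<le> int i" using B[THEN conjunct2, THEN conjunct1] by blast
  have bl: "\<And>i j. (i, j) \<in> D' \<Longrightarrow> bal2 D' T' i j" using B[THEN conjunct2, THEN conjunct2, THEN conjunct1] by blast
  have cs: "\<And>i j i'. (i, j) \<in> D' \<Longrightarrow> (i', j) \<in> D' \<Longrightarrow> i \<noteq> i' \<Longrightarrow> T' i j = T' i' j \<Longrightarrow> T' i j \<le> 0"
    using B[THEN conjunct2, THEN conjunct2, THEN conjunct2, THEN conjunct1] by blast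
  have rs: "\<And>i j j'. (i, j) \<in> D' \<Longrightarrow> (i, j') \<in> D' \<Longrightarrow> j \<noteq> j' \<Longrightarrow> T' i j = T' i j' \<Longrightarrow> 0 \<le> T' i j"
    using B[THEN conjunct2, THEN conjunct2, THEN conjunct2, THEN conjunct2] by blast
  have p1pos: "1 \<le> p1" using permutes_in_image[OF permutes_inv[OF w'], of r] r1 r2 by auto
  have QZ: "(\<forall>i j. (i, j) \<notin> D \<longrightarrow> T i j = 0)"
  proof (intro allI impI)
    fix i j assume nd: "(i, j) \<notin> D"
    then have "\<not> (i = p1 \<and> j = r)" "(i, sw r j) \<notin> D'" using memD[of i j] by auto
    then show "T i j = 0" using TT[of i j] z by auto
  qed
  have QF: "(\<forall>i j. (i, j) \<in> D \<longrightarrow> T i j \<noteq> 0 \<and> - int j \<le> T i j \<and> T i j \<le> int i)"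
  proof (intro allI impI)
    fix i j assume h: "(i, j) \<in> D"
    show "T i j \<noteq> 0 \<and> - int j \<le> T i j \<and> T i j \<le> int i"
    proof (cases "i = p1 \<and> j = r")
      case True then show ?thesis using TT t0 tr by simp
    next
      case False
      then have h': "(i, sw r j) \<in> D'" and v: "T i j = T' i (sw r j)" using inD'_of_D[of i j] h TT[of i j] by auto
      have "- int (sw r j) \<le> T' i (sw r j)" using fl[OF h'] by simp
      moreover have "j = r \<Longrightarrow> - int r \<le> T' i (Suc r)" using tmin'[OF h'] tr by simp
      ultimately have "- int j \<le> T' i (sw r j)" by (auto simp: sw_cases split: if_splits)
      then show ?thesis using fl[OF h'] v by simp
    qed
  qed
  have QB: "(\<forall>i j. (i, j) \<in> D \<longrightarrow> bal2 D T i j)"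
  proof (intro allI impI)
    fix i j assume "(i, j) \<in> D"
    then show "bal2 D T i j" using L2_bal[OF bl tmin'] by blast
  qed
  have QC: "(\<forall>i j i'. (i, j) \<in> D \<and> (i', j) \<in> D \<and> i \<noteq> i' \<and> T i j = T i' j \<longrightarrow> T i j \<le> 0)"
  proof (intro allI impI)
    fix i j i' assume h: "(i, j) \<in> D \<and> (i', j) \<in> D \<and> i \<noteq> i' \<and> T i j = T i' j"
    show "T i j \<le> 0"
    proof (cases "(i = p1 \<and> j = r) \<or> (i' = p1 \<and> j = r)")
      case True
      then have "T i j = t"
      proof
        assume "i = p1 \<and> j = r" then show "T i j = t" using T_p1 by simp
      next
        assume "i' = p1 \<and> j = r" then show "T i j = t" using T_p1 h by simp
      qed
      then show ?thesis using t0 by simp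
    next
      case False
      have a: "(i, sw r j) \<in> D'" "T i j = T' i (sw r j)"
        using inD'_of_D[of i j] h False TT[of i j] by auto
      have b: "(i', sw r j) \<in> D'" "T i' j = T' i' (sw r j)"
        using inD'_of_D[of i' j] h False TT[of i' j] by auto
      have "T' i (sw r j) \<le> 0" using cs[OF a(1) b(1)] h a(2) b(2) by simp
      then show ?thesis using a(2) by simp
    qed
  qed
  have QR: "(\<forall>i j j'. (i, j) \<in> D \<and> (i, j') \<in> D \<and> j \<noteq> j' \<and> T i j = T i j' \<longrightarrow> 0 \<le> T i j)"
  proof (intro allI impI)
    fix i j j' assume h: "(i, j) \<in> D \<and> (i, j') \<in> D \<and> j \<noteq> j' \<and> T i j = T i j'"
    show "0 \<le> T i j"
    proof (cases "(i = p1 \<and> j = r) \<or> (i = p1 \<and> j' = r)")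
      case True
      have ex: "\<exists>c. (p1, c) \<in> D \<and> c \<noteq> r \<and> T p1 c = t"
      proof (cases "j = r")
        case True
        then have "i = p1" using \<open>(i = p1 \<and> j = r) \<or> (i = p1 \<and> j' = r)\<close> by auto
        then show ?thesis using h True T_p1 by auto
      next
        case False
        then have "i = p1" "j' = r" using \<open>(i = p1 \<and> j = r) \<or> (i = p1 \<and> j' = r)\<close> by auto
        then show ?thesis using h False T_p1 by auto
      qed
      then obtain c where c: "(p1, c) \<in> D" "c \<noteq> r" "T p1 c = t" by blast
      then have "(p1, sw r c) \<in> D'" "T p1 c = T' p1 (sw r c)"
        using inD'_of_D[of p1 c] TT[of p1 c] by auto
      then have False using rowne[of "sw r c"] c(3) by simp
      then show ?thesis ..
    next
      case False
      have a: "(i, sw r j) \<in> D'" "T i j = T' i (sw r j)"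
        using inD'_of_D[of i j] h False TT[of i j] by auto
      have b: "(i, sw r j') \<in> D'" "T i j' = T' i (sw r j')"
        using inD'_of_D[of i j'] h False TT[of i j'] by auto
      have ne: "sw r j \<noteq> sw r j'" using h by (simp add: sw_eq_iff)
      have "0 \<le> T' i (sw r j)" using rs[OF a(1) b(1) ne] h a(2) b(2) by simp
      then show ?thesis using a(2) by simp
    qed
  qed
  show ?thesis unfolding is_BSL_alt by (intro conjI QZ QF QB QC QR)
qed

lemma BSL_L1:
  assumes B: "is_BSL n (sw r \<circ> w') T" and t0: "t < 0"
    and tmin: "\<And>i c. (i, c) \<in> D \<Longrightarrow> t \<le> T i c"
    and z0: "T' p1 (Suc r) = 0"
  shows "is_BSL n w' T'"
proof -
  note B = B[unfolded is_BSL_alt]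
  have z: "\<And>i j. (i, j) \<notin> D \<Longrightarrow> T i j = 0" using B[THEN conjunct1] by blast
  have fl: "\<And>i j. (i, j) \<in> D \<Longrightarrow> T i j \<noteq> 0 \<and> - int j \<le> T i j \<and> T i j \<le> int i" using B[THEN conjunct2, THEN conjunct1] by blast
  have bl: "\<And>i j. (i, j) \<in> D \<Longrightarrow> bal2 D T i j" using B[THEN conjunct2, THEN conjunct2, THEN conjunct1] by blast
  have cs: "\<And>i j i'. (i, j) \<in> D \<Longrightarrow> (i', j) \<in> D \<Longrightarrow> i \<noteq> i' \<Longrightarrow> T i j = T i' j \<Longrightarrow> T i j \<le> 0"
    using B[THEN conjunct2, THEN conjunct2, THEN conjunct2, THEN conjunct1] by blast
  have rs: "\<And>i j j'. (i, j) \<in> D \<Longrightarrow> (i, j') \<in> D \<Longrightarrow> j \<noteq> j' \<Longrightarrow> T i j = T i j' \<Longrightarrow> 0 \<le> T i j"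
    using B[THEN conjunct2, THEN conjunct2, THEN conjunct2, THEN conjunct2] by blast
  have b0: "(p1, r) \<in> D" using memD by simp
  have tr: "- int r \<le> t" using fl[OF b0] T_p1 by simp
  have conv: "\<And>i j. (i, j) \<in> D' \<Longrightarrow> (i, sw r j) \<in> D \<and> T' i j = T i (sw r j)"
  proof -
    fix i j assume h: "(i, j) \<in> D'"
    have "\<not> (i = p1 \<and> j = Suc r)" using h not_p1_r1 by auto
    then show "(i, sw r j) \<in> D \<and> T' i j = T i (sw r j)" using inD_of_D'[OF h] Tsw[of i j] by auto
  qed
  have rowne: "\<And>c. (p1, c) \<in> D' \<Longrightarrow> T' p1 c \<noteq> t"
  proof
    fix c assume h: "(p1, c) \<in> D'" and e: "T' p1 c = t"
    have "sw r c \<noteq> r" using h not_p1_r1 by (auto simp: sw_cases split: if_splits)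
    then show False using rs[OF conjunct1[OF conv[OF h]] b0] conv[OF h] e T_p1 t0 by auto
  qed
  have QZ: "(\<forall>i j. (i, j) \<notin> D' \<longrightarrow> T' i j = 0)"
  proof (intro allI impI)
    fix i j assume h: "(i, j) \<notin> D'"
    show "T' i j = 0"
    proof (cases "i = p1 \<and> j = Suc r")
      case True then show ?thesis using z0 by simp
    next
      case False
      then have "(i, sw r j) \<notin> D" using memDsw h by simp
      then show ?thesis using z Tsw[of i j] False by simp
    qed
  qed
  have QF: "(\<forall>i j. (i, j) \<in> D' \<longrightarrow> T' i j \<noteq> 0 \<and> - int j \<le> T' i j \<and> T' i j \<le> int i)"
  proof (intro allI impI)
    fix i j assume h: "(i, j) \<in> D'"
    have c: "(i, sw r j) \<in> D" "T' i j = T i (sw r j)" using conv[OF h] by auto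
    have "- int (sw r j) \<le> T i (sw r j)" using fl[OF c(1)] by simp
    moreover have "j = r \<Longrightarrow> - int r \<le> T i (Suc r)" using tmin[of i "Suc r"] c tr by simp
    ultimately have "- int j \<le> T i (sw r j)" by (auto simp: sw_cases split: if_splits)
    then show "T' i j \<noteq> 0 \<and> - int j \<le> T' i j \<and> T' i j \<le> int i" using fl[OF c(1)] c by simp
  qed
  have QB: "(\<forall>i j. (i, j) \<in> D' \<longrightarrow> bal2 D' T' i j)"
  proof (intro allI impI)
    fix i j assume "(i, j) \<in> D'"
    then show "bal2 D' T' i j" using L1_bal[OF bl tmin rowne] by blast
  qed
  have QC: "(\<forall>i j i'. (i, j) \<in> D' \<and> (i', j) \<in> D' \<and> i \<noteq> i' \<and> T' i j = T' i' j \<longrightarrow> T' i j \<le> 0)"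
  proof (intro allI impI)
    fix i j i' assume h: "(i, j) \<in> D' \<and> (i', j) \<in> D' \<and> i \<noteq> i' \<and> T' i j = T' i' j"
    then show "T' i j \<le> 0" using conv cs by metis
  qed
  have QR: "(\<forall>i j j'. (i, j) \<in> D' \<and> (i, j') \<in> D' \<and> j \<noteq> j' \<and> T' i j = T' i j' \<longrightarrow> 0 \<le> T' i j)"
  proof (intro allI impI)
    fix i j j' assume h: "(i, j) \<in> D' \<and> (i, j') \<in> D' \<and> j \<noteq> j' \<and> T' i j = T' i j'"
    moreover have "sw r j \<noteq> sw r j'" using h sw_eq_iff by metis
    ultimately show "0 \<le> T' i j" using conv rs by metis
  qed
  show ?thesis unfolding is_BSL_alt by (intro conjI QZ QF QB QC QR)
qed

end

lemma BSL_zero: "is_BSL n w T \<Longrightarrow> (i, j) \<notin> diagram n w \<Longrightarrow> T i j = 0"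
  by (drule iffD1[OF is_BSL_alt], drule conjunct1) blast
lemma BSL_flag: "is_BSL n w T \<Longrightarrow> (i, j) \<in> diagram n w \<Longrightarrow> T i j \<noteq> 0 \<and> - int j \<le> T i j \<and> T i j \<le> int i"
  by (drule iffD1[OF is_BSL_alt], drule conjunct2, drule conjunct1) blast
lemma BSL_bal: "is_BSL n w T \<Longrightarrow> (i, j) \<in> diagram n w \<Longrightarrow> bal2 (diagram n w) T i j"
  by (drule iffD1[OF is_BSL_alt], drule conjunct2, drule conjunct2, drule conjunct1) blast
lemma BSL_col: "is_BSL n w T \<Longrightarrow> (i, j) \<in> diagram n w \<Longrightarrow> (i', j) \<in> diagram n w \<Longrightarrow> i \<noteq> i' \<Longrightarrow> T i j = T i' j \<Longrightarrow> T i j \<le> 0"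
  by (drule iffD1[OF is_BSL_alt], drule conjunct2, drule conjunct2, drule conjunct2, drule conjunct1) blast
lemma BSL_row: "is_BSL n w T \<Longrightarrow> (i, j) \<in> diagram n w \<Longrightarrow> (i, j') \<in> diagram n w \<Longrightarrow> j \<noteq> j' \<Longrightarrow> T i j = T i j' \<Longrightarrow> 0 \<le> T i j"
  by (drule iffD1[OF is_BSL_alt], drule conjunct2, drule conjunct2, drule conjunct2, drule conjunct2) blast

lemma bal2_unfg:
  assumes "bal2 X U i c" "U i c = y"
  shows "cc X U i c (\<lambda>x. x < y) \<le> rc X U i c (\<lambda>x. y \<le> x)"
        "rc X U i c (\<lambda>x. y < x) \<le> cc X U i c (\<lambda>x. x \<le> y)"
  using assms unfolding bal2_def by auto

lemma EX_box:
  assumes w: "w permutes {1..n}" and B: "is_BSL n w T"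
    and neg: "(i0, j0) \<in> diagram n w" "T i0 j0 < 0"
  shows "\<exists>q r. (q, r) \<in> diagram n w \<and> w q = Suc r \<and> T q r < 0 \<and>
                (\<forall>i c. (i, c) \<in> diagram n w \<longrightarrow> T q r \<le> T i c)"
proof -
  let ?D = "diagram n w"
  define V where "V = (\<lambda>(i, c). T i c) ` ?D"
  have fV: "finite V" unfolding V_def by simp
  have nV: "V \<noteq> {}" using neg unfolding V_def by auto
  define t where "t = Min V"
  have tle: "\<And>i c. (i, c) \<in> ?D \<Longrightarrow> t \<le> T i c"
    unfolding t_def V_def using fV by (auto intro: Min_le)
  have tin: "t \<in> V" unfolding t_def using fV nV by simp
  have t0: "t < 0" using tle[OF neg(1)] neg(2) by simp
  define M where "M = {p \<in> ?D. T (fst p) (snd p) = t}"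
  have fM: "finite M" unfolding M_def by simp
  have nM: "M \<noteq> {}" using tin unfolding M_def V_def by auto
  define i where "i = Max (fst ` M)"
  have "i \<in> fst ` M" unfolding i_def using fM nM by simp
  then obtain j where ijM: "(i, j) \<in> M" by auto
  have ij: "(i, j) \<in> ?D" "T i j = t" using ijM unfolding M_def by auto
  have imax: "\<And>k c. (k, c) \<in> ?D \<Longrightarrow> T k c = t \<Longrightarrow> k \<le> i"
  proof -
    fix k c assume "(k, c) \<in> ?D" "T k c = t"
    then have "(k, c) \<in> M" unfolding M_def by simp
    then have "k \<in> fst ` M" by (metis fst_conv imageI)
    then show "k \<le> i" unfolding i_def using fM by (simp add: Max_ge)
  qed
  have cc0: "cc ?D T i j (\<lambda>v. v \<le> t) = 0"
  proof -
    have "{k. (k, j) \<in> ?D \<and> i < k \<and> T k j \<le> t} = {}"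
    proof (rule ccontr)
      assume "{k. (k, j) \<in> ?D \<and> i < k \<and> T k j \<le> t} \<noteq> {}"
      then obtain k where k: "(k, j) \<in> ?D" "i < k" "T k j \<le> t" by auto
      then have "T k j = t" using tle[OF k(1)] by simp
      then show False using imax[OF k(1)] k(2) by simp
    qed
    then show ?thesis unfolding cc_def by (metis card.empty)
  qed
  have rc0: "rc ?D T i j (\<lambda>v. t < v) = 0"
    using bal2_unfg(2)[OF BSL_bal[OF B ij(1)] ij(2)] cc0 by simp
  have rowempty: "\<And>c. j < c \<Longrightarrow> (i, c) \<notin> ?D"
  proof
    fix c assume c: "j < c" "(i, c) \<in> ?D"
    have "T i c \<noteq> t"
    proof
      assume "T i c = t"
      then have "0 \<le> T i j" using BSL_row[OF B ij(1) c(2)] c(1) ij(2) by simp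
      then show False using ij(2) t0 by simp
    qed
    then have "t < T i c" using tle[OF c(2)] by simp
    then have "c \<in> {c'. (i, c') \<in> ?D \<and> j < c' \<and> t < T i c'}" using c by simp
    moreover have "finite {c'. (i, c') \<in> ?D \<and> j < c' \<and> t < T i c'}" by (rule fin_rowset) simp
    ultimately have "rc ?D T i j (\<lambda>v. t < v) > 0" unfolding rc_def using card_gt_0_iff by blast
    then show False using rc0 by simp
  qed
  have ijd: "1 \<le> i" "1 \<le> j" "j \<le> n" "i < inv w j" "j < w i" using ij(1) unfolding diagram_iff[OF w] by auto
  have "inv w j \<in> {1..n}" using permutes_in_image[OF permutes_inv[OF w], of j] ijd by simp
  then have "i \<in> {1..n}" using ijd by simp
  then have wi: "w i \<le> n" using permutes_in_image[OF w, of i] by simp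
  show ?thesis
  proof (cases "w i = Suc j")
    case True
    then show ?thesis using ij tle t0 by auto
  next
    case False
    then have jw: "Suc j < w i" using ijd by simp
    define m where "m = inv w (Suc j)"
    have wm: "w m = Suc j" unfolding m_def using permutes_inverses[OF w] by simp
    have mrange: "m \<in> {1..n}" unfolding m_def using permutes_in_image[OF permutes_inv[OF w], of "Suc j"] jw wi by auto
    have "(i, Suc j) \<notin> ?D" using rowempty by simp
    then have "\<not> i < m" unfolding diagram_iff[OF w] m_def using ijd jw wi by auto
    moreover have "m \<noteq> i" using wm False by auto
    ultimately have mi: "m < i" by simp
    have mD: "(m, j) \<in> ?D" unfolding diagram_iff[OF w] using mrange mi ijd wm by auto
    have rowm: "rc ?D T m j (\<lambda>v. T m j \<le> v) = 0"
    proof -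
      have "{c'. (m, c') \<in> ?D \<and> j < c' \<and> T m j \<le> T m c'} = {}"
        unfolding diagram_iff[OF w] using wm by auto
      then show ?thesis unfolding rc_def by (metis card.empty)
    qed
    have ccm: "cc ?D T m j (\<lambda>v. v < T m j) = 0"
      using bal2_unfg(1)[OF BSL_bal[OF B mD] refl] rowm by simp
    have "T m j \<le> t"
    proof (rule ccontr)
      assume "\<not> T m j \<le> t"
      then have "i \<in> {k. (k, j) \<in> ?D \<and> m < k \<and> T k j < T m j}" using ij mi by simp
      moreover have "finite {k. (k, j) \<in> ?D \<and> m < k \<and> T k j < T m j}" by (rule fin_colset) simp
      ultimately have "cc ?D T m j (\<lambda>v. v < T m j) > 0" unfolding cc_def using card_gt_0_iff by blast
      then show False using ccm by simp
    qed
    then have "T m j = t" using tle[OF mD] by simp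
    then show ?thesis using mD wm tle t0 by auto
  qed
qed

context swp begin
lemma conv: "(i, j) \<in> D' \<Longrightarrow> (i, sw r j) \<in> D \<and> T' i j = T i (sw r j)"
proof -
  assume h: "(i, j) \<in> D'"
  have "\<not> (i = p1 \<and> j = Suc r)" using h not_p1_r1 by auto
  then show "(i, sw r j) \<in> D \<and> T' i j = T i (sw r j)" using inD_of_D'[OF h] Tsw[of i j] by auto
qed
end

lemma Tu_ge:
  assumes "is_BSL n u Tu" "\<And>i c. (i, c) \<in> diagram n u \<Longrightarrow> t \<le> Tu i c" "t < 0"
  shows "t \<le> Tu a b"
proof (cases "(a, b) \<in> diagram n u")
  case True then show ?thesis using assms by simp
next
  case False then show ?thesis using BSL_zero[OF assms(1) False] assms(3) by simp
qed

lemma Tv_ge: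
  assumes "is_BSL n v Tv" "\<And>i c. (i, c) \<in> diagram n v \<Longrightarrow> 0 < Tv i c"
  shows "0 \<le> Tv a b"
proof (cases "(a, b) \<in> diagram n v")
  case True then show ?thesis using assms by (simp add: less_imp_le)
next
  case False then show ?thesis using BSL_zero[OF assms(1) False] by simp
qed

lemma box_range:
  assumes u: "u permutes {1..n}" and b: "(q, r) \<in> diagram n u" and uq: "u q = Suc r"
  shows "1 \<le> r" "Suc r \<le> n" "q < inv u r" "inv u (Suc r) = q"
proof -
  show "1 \<le> r" using b unfolding diagram_iff[OF u] by simp
  show "q < inv u r" using b unfolding diagram_iff[OF u] by simp
  have "q \<in> {1..n}" using b unfolding diagram_iff[OF u]
    using permutes_in_image[OF permutes_inv[OF u], of r] by auto
  then show "Suc r \<le> n" using permutes_in_image[OF u, of q] uq by simp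
  show "inv u (Suc r) = q" using uq permutes_inverses[OF u] by metis
qed

lemma part1:
  "\<forall>u v Tu Tv. card (diagram n u) = m \<longrightarrow> u permutes {1..n} \<longrightarrow> v permutes {1..n} \<longrightarrow>
     perm_len n (u \<circ> v) = perm_len n u + perm_len n v \<longrightarrow>
     is_BSL n u Tu \<longrightarrow> (\<forall>i j. (i, j) \<in> diagram n u \<longrightarrow> Tu i j < 0) \<longrightarrow>
     is_BSL n v Tv \<longrightarrow> (\<forall>i j. (i, j) \<in> diagram n v \<longrightarrow> 0 < Tv i j) \<longrightarrow>
     is_BSL n (u \<circ> v) (\<lambda>i j. Tu (v i) j + Tv i (inv u j))"
proof (induction m)
  case 0
  show ?case
  proof (intro allI impI)
    fix u v Tu Tv
    assume c: "card (diagram n u) = 0" and u: "u permutes {1..n}" and v: "v permutes {1..n}"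
      and Bu: "is_BSL n u Tu" and Bv: "is_BSL n v Tv"
    have e: "diagram n u = {}" using c by simp
    then have uid: "u = id" by (rule diagram_empty_id[OF u])
    have "\<And>i j. Tu i j = 0" using BSL_zero[OF Bu] e by simp
    then have "(\<lambda>i j. Tu (v i) j + Tv i (inv u j)) = Tv" using uid by (simp add: inv_id)
    then show "is_BSL n (u \<circ> v) (\<lambda>i j. Tu (v i) j + Tv i (inv u j))" using Bv uid by simp
  qed
next
  case (Suc m)
  show ?case
  proof (intro allI impI)
    fix u v Tu Tv
    assume c: "card (diagram n u) = Suc m" and u: "u permutes {1..n}" and v: "v permutes {1..n}"
      and len: "perm_len n (u \<circ> v) = perm_len n u + perm_len n v"
      and Bu: "is_BSL n u Tu" and mu: "\<forall>i j. (i, j) \<in> diagram n u \<longrightarrow> Tu i j < 0"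
      and Bv: "is_BSL n v Tv" and mv: "\<forall>i j. (i, j) \<in> diagram n v \<longrightarrow> 0 < Tv i j"
    have "diagram n u \<noteq> {}" using c by auto
    then obtain i0 j0 where b0: "(i0, j0) \<in> diagram n u" by auto
    then have "Tu i0 j0 < 0" using mu by simp
    then obtain q r where qr: "(q, r) \<in> diagram n u" "u q = Suc r" "Tu q r < 0"
      "\<forall>i c. (i, c) \<in> diagram n u \<longrightarrow> Tu q r \<le> Tu i c"
      using EX_box[OF u Bu b0] by blast
    define t where "t = Tu q r"
    have t0: "t < 0" and tmin: "\<And>i c. (i, c) \<in> diagram n u \<Longrightarrow> t \<le> Tu i c" using qr t_def by auto
    note rg = box_range[OF u qr(1) qr(2)]
    have swp_perm: "sw r permutes {1..n}" by (rule sw_permutes[OF rg(1) rg(2)])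
    define u' where "u' = sw r \<circ> u"
    have u': "u' permutes {1..n}" unfolding u'_def by (rule permutes_compose[OF u swp_perm])
    have iu': "\<And>x. inv u' x = inv u (sw r x)" unfolding u'_def using inv_sw_comp[OF u] by simp
    have iu'r: "inv u' r = q" using iu' rg(4) by simp
    have iu'r1: "inv u' (Suc r) = inv u r" using iu' by simp
    have asc: "inv u' r < inv u' (Suc r)" using iu'r iu'r1 rg(3) by simp
    have su: "sw r \<circ> u' = u" unfolding u'_def by simp
    define Tu' where "Tu' = (\<lambda>i j. if i = q \<and> sw r j = r then 0 else Tu i (sw r j))"
    have lA: "swp n u' r t Tu Tu'"
      unfolding swp_def using u' rg asc
      by (auto simp: iu'r Tu'_def t_def)
    interpret A: swp n u' r t Tu Tu' by (rule lA)
    have Bu': "is_BSL n u' Tu'"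
      by (rule A.BSL_L1) (use Bu su t0 tmin in \<open>auto simp: Tu'_def iu'r\<close>)
    have mu': "\<forall>i j. (i, j) \<in> diagram n u' \<longrightarrow> Tu' i j < 0"
    proof (intro allI impI)
      fix i j assume "(i, j) \<in> diagram n u'"
      then have "(i, sw r j) \<in> diagram n u" "Tu' i j = Tu i (sw r j)" using A.conv su by auto
      then show "Tu' i j < 0" using mu by simp
    qed
    have cu: "card (diagram n u) = Suc (card (diagram n u'))"
      using card_swap_asc[OF u' rg(1) rg(2) asc] su by simp
    define w' where "w' = u' \<circ> v"
    have w': "w' permutes {1..n}" unfolding w'_def by (rule permutes_compose[OF v u'])
    have iw': "\<And>x. inv w' x = inv v (inv u' x)" unfolding w'_def using inv_comp_perm[OF u' v] by simp
    have sw': "sw r \<circ> w' = u \<circ> v" unfolding w'_def using su by (simp add: o_assoc)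
    have L: "\<And>x. x permutes {1..n} \<Longrightarrow> perm_len n x = card (diagram n x)" by (rule perm_len_card)
    have uv: "u \<circ> v permutes {1..n}" by (rule permutes_compose[OF v u])
    have asc': "inv w' r < inv w' (Suc r)"
    proof (rule ccontr)
      assume "\<not> inv w' r < inv w' (Suc r)"
      moreover have "inv w' r \<noteq> inv w' (Suc r)" using iw' iu'r iu'r1 rg(3)
        by (metis inv_into_injective less_irrefl permutes_inverses(1) v)
      ultimately have desc: "inv w' (Suc r) < inv w' r" by simp
      have "card (diagram n w') = Suc (card (diagram n (sw r \<circ> w')))"
        by (rule card_swap_desc[OF w' rg(1) rg(2) desc])
      then have "perm_len n w' = Suc (perm_len n (u \<circ> v))" using L[OF w'] L[OF uv] sw' by simp
      moreover have "perm_len n w' \<le> perm_len n u' + perm_len n v" unfolding w'_def by (rule perm_len_subadd[OF u' v])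
      moreover have "perm_len n u = Suc (perm_len n u')" using L[OF u] L[OF u'] cu by simp
      ultimately show False using len by simp
    qed
    have lenw': "perm_len n w' = perm_len n u' + perm_len n v"
    proof -
      have "card (diagram n (sw r \<circ> w')) = Suc (card (diagram n w'))"
        by (rule card_swap_asc[OF w' rg(1) rg(2) asc'])
      then have "perm_len n (u \<circ> v) = Suc (perm_len n w')" using L[OF w'] L[OF uv] sw' by simp
      moreover have "perm_len n u = Suc (perm_len n u')" using L[OF u] L[OF u'] cu by simp
      ultimately show ?thesis using len by simp
    qed
    define T' where "T' = (\<lambda>i j. Tu' (v i) j + Tv i (inv u' j))"
    have BT': "is_BSL n w' T'"
      using Suc.IH[rule_format, of u' v Tu' Tv] cu c u' v lenw' Bu' mu' Bv mv
      unfolding T'_def w'_def by simp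
    define T where "T = (\<lambda>i j. if i = inv w' r \<and> j = r then t else T' i (sw r j))"
    have lB: "swp n w' r t T T'"
      unfolding swp_def using w' rg asc' by (simp add: T_def)
    interpret Bs: swp n w' r t T T' by (rule lB)
    have vp: "v (inv w' r) = q" using iw' iu'r permutes_inverses[OF v] by simp
    have Tu'ge: "\<And>a b. t \<le> Tu' a b"
      unfolding Tu'_def using Tu_ge[OF Bu tmin t0] t0 by simp
    have Tvge: "\<And>a b. 0 \<le> Tv a b" using Tv_ge[OF Bv] mv by blast
    have tr: "- int r \<le> t" using BSL_flag[OF Bu qr(1)] t_def by simp
    have BT: "is_BSL n (sw r \<circ> w') T"
    proof (rule Bs.BSL_L2[OF BT' t0 tr])
      fix i c assume "(i, c) \<in> diagram n w'"
      show "t \<le> T' i c" unfolding T'_def using Tu'ge[of "v i" c] Tvge[of i "inv u' c"] by simp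
    next
      fix c assume h: "(inv w' r, c) \<in> diagram n w'"
      let ?p = "inv w' r"
      show "T' ?p c \<noteq> t"
      proof (cases "Tu' q c = 0")
        case True
        then show ?thesis unfolding T'_def using vp Tvge[of ?p "inv u' c"] t0 by simp
      next
        case False
        then have qc: "(q, c) \<in> diagram n u'" using BSL_zero[OF Bu'] by blast
        then have "(v ?p, c) \<in> diagram n u'" using vp by simp
        then have "(?p, inv u' c) \<notin> diagram n v" by (rule disj_diagrams[OF u' v])
        then have tv0: "Tv ?p (inv u' c) = 0" using BSL_zero[OF Bv] by simp
        have cv: "(q, sw r c) \<in> diagram n u" "Tu' q c = Tu q (sw r c)" using A.conv[OF qc] su by auto
        have "c \<noteq> Suc r" using qc A.not_p1_r1 iu'r by auto
        then have ne: "sw r c \<noteq> r" by (auto simp: sw_cases split: if_splits)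
        have "Tu q (sw r c) \<noteq> t"
        proof
          assume "Tu q (sw r c) = t"
          then have "0 \<le> Tu q (sw r c)" using BSL_row[OF Bu cv(1) qr(1) ne] t_def by simp
          then show False using \<open>Tu q (sw r c) = t\<close> t0 by simp
        qed
        then show ?thesis unfolding T'_def using vp tv0 cv(2) by simp
      qed
    qed
    have Teq: "T = (\<lambda>i j. Tu (v i) j + Tv i (inv u j))"
    proof (intro ext)
      fix i j
      have ij: "inv u' (sw r j) = inv u j" using iu' by simp
      show "T i j = Tu (v i) j + Tv i (inv u j)"
      proof (cases "i = inv w' r \<and> j = r")
        case True
        then have "v i = q" "j = r" using vp by auto
        moreover have "(i, inv u r) \<notin> diagram n v"
          unfolding diagram_iff[OF v] using \<open>v i = q\<close> rg(3) by auto
        ultimately show ?thesis unfolding T_def using True BSL_zero[OF Bv] t_def by simp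
      next
        case False
        have "v i = q \<longleftrightarrow> i = inv w' r" using vp permutes_inverses[OF v] by metis
        then have "Tu' (v i) (sw r j) = Tu (v i) j" unfolding Tu'_def using False by auto
        then show ?thesis unfolding T_def T'_def using False ij by auto
      qed
    qed
    show "is_BSL n (u \<circ> v) (\<lambda>i j. Tu (v i) j + Tv i (inv u j))"
      using BT sw' Teq by simp
  qed
qed

definition good :: "nat \<Rightarrow> (nat \<Rightarrow> nat) \<Rightarrow> labeling \<Rightarrow> (nat \<Rightarrow> nat) \<Rightarrow> (nat \<Rightarrow> nat) \<Rightarrow> labeling \<Rightarrow> labeling \<Rightarrow> bool" where
  "good n w T u v Tu Tv \<longleftrightarrow> u permutes {1..n} \<and> v permutes {1..n} \<and> u \<circ> v = w \<and>
     perm_len n w = perm_len n u + perm_len n v \<and>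
     is_BSL n u Tu \<and> (\<forall>i j. (i, j) \<in> diagram n u \<longrightarrow> Tu i j < 0) \<and>
     is_BSL n v Tv \<and> (\<forall>i j. (i, j) \<in> diagram n v \<longrightarrow> 0 < Tv i j) \<and>
     T = (\<lambda>i j. Tu (v i) j + Tv i (inv u j))"

lemma nomarked:
  assumes w: "w permutes {1..n}" and B: "is_BSL n w T"
    and nm: "\<And>i j. (i, j) \<in> diagram n w \<Longrightarrow> \<not> T i j < 0"
  shows "good n w T id w (\<lambda>_ _. 0) T"
proof -
  have l0: "perm_len n id = 0" using perm_len_card[OF permutes_id] diagram_id by simp
  have b0: "is_BSL n id (\<lambda>_ _. 0)" unfolding is_BSL_alt diagram_id by simp
  have pos: "\<forall>i j. (i, j) \<in> diagram n w \<longrightarrow> 0 < T i j"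
  proof (intro allI impI)
    fix i j assume h: "(i, j) \<in> diagram n w"
    then show "0 < T i j" using BSL_flag[OF B h] nm[OF h] by simp
  qed
  show ?thesis unfolding good_def using w l0 b0 B pos diagram_id by (simp add: permutes_id inv_id)
qed

lemma part2:
  "\<forall>w T. card (diagram n w) = m \<longrightarrow> w permutes {1..n} \<longrightarrow> is_BSL n w T \<longrightarrow>
     (\<exists>u v Tu Tv. good n w T u v Tu Tv)"
proof (induction m)
  case 0
  show ?case
  proof (intro allI impI)
    fix w T assume c: "card (diagram n w) = 0" and w: "w permutes {1..n}" and B: "is_BSL n w T"
    have "diagram n w = {}" using c by simp
    then show "\<exists>u v Tu Tv. good n w T u v Tu Tv" using nomarked[OF w B] by blast
  qed
next
  case (Suc m)
  show ?case
  proof (intro allI impI)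
    fix w T assume c: "card (diagram n w) = Suc m" and w: "w permutes {1..n}" and B: "is_BSL n w T"
    show "\<exists>u v Tu Tv. good n w T u v Tu Tv"
    proof (cases "\<exists>i j. (i, j) \<in> diagram n w \<and> T i j < 0")
      case False
      then show ?thesis using nomarked[OF w B] by blast
    next
      case True
      then obtain i0 j0 where b0: "(i0, j0) \<in> diagram n w" "T i0 j0 < 0" by blast
      then obtain q r where qr: "(q, r) \<in> diagram n w" "w q = Suc r" "T q r < 0"
        "\<forall>i c. (i, c) \<in> diagram n w \<longrightarrow> T q r \<le> T i c"
        using EX_box[OF w B b0] by blast
      define t where "t = T q r"
      have t0: "t < 0" and tmin: "\<And>i c. (i, c) \<in> diagram n w \<Longrightarrow> t \<le> T i c" using qr t_def by auto
      note rg = box_range[OF w qr(1) qr(2)]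
      have swp_perm: "sw r permutes {1..n}" by (rule sw_permutes[OF rg(1) rg(2)])
      define w' where "w' = sw r \<circ> w"
      have w': "w' permutes {1..n}" unfolding w'_def by (rule permutes_compose[OF w swp_perm])
      have iw': "\<And>x. inv w' x = inv w (sw r x)" unfolding w'_def using inv_sw_comp[OF w] by simp
      have iw'r: "inv w' r = q" using iw' rg(4) by simp
      have iw'r1: "inv w' (Suc r) = inv w r" using iw' by simp
      have asc: "inv w' r < inv w' (Suc r)" using iw'r iw'r1 rg(3) by simp
      have sw: "sw r \<circ> w' = w" unfolding w'_def by simp
      define T' where "T' = (\<lambda>i j. if i = q \<and> sw r j = r then 0 else T i (sw r j))"
      have lA: "swp n w' r t T T'"
        unfolding swp_def using w' rg asc by (auto simp: iw'r T'_def t_def)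
      interpret A: swp n w' r t T T' by (rule lA)
      have BT': "is_BSL n w' T'"
        by (rule A.BSL_L1) (use B sw t0 tmin in \<open>auto simp: T'_def iw'r\<close>)
      have cw: "card (diagram n w) = Suc (card (diagram n w'))"
        using card_swap_asc[OF w' rg(1) rg(2) asc] sw by simp
      have "card (diagram n w') = m" using cw c by simp
      then have "\<exists>u v Tu Tv. good n w' T' u v Tu Tv" using Suc.IH[rule_format, OF _ w' BT'] by blast
      then obtain u' v Tu' Tv where G: "good n w' T' u' v Tu' Tv" by blast
      have u': "u' permutes {1..n}" and v: "v permutes {1..n}" and uvw: "u' \<circ> v = w'"
        and lenw': "perm_len n w' = perm_len n u' + perm_len n v"
        and Bu': "is_BSL n u' Tu'" and mu': "\<forall>i j. (i, j) \<in> diagram n u' \<longrightarrow> Tu' i j < 0"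
        and Bv: "is_BSL n v Tv" and mv: "\<forall>i j. (i, j) \<in> diagram n v \<longrightarrow> 0 < Tv i j"
        and T'eq: "T' = (\<lambda>i j. Tu' (v i) j + Tv i (inv u' j))"
        using G unfolding good_def by auto
      have L: "\<And>x. x permutes {1..n} \<Longrightarrow> perm_len n x = card (diagram n x)" by (rule perm_len_card)
      have iw'2: "\<And>x. inv w' x = inv v (inv u' x)" using inv_comp_perm[OF u' v] uvw by simp
      have pq: "v q = inv u' r" using iw'2[of r] iw'r permutes_inverses[OF v] by metis
      have lenw: "perm_len n w = Suc (perm_len n w')"
        using card_swap_asc[OF w' rg(1) rg(2) asc] sw L[OF w] L[OF w'] by simp
      have asc_u: "inv u' r < inv u' (Suc r)"
      proof (rule ccontr)
        assume "\<not> inv u' r < inv u' (Suc r)"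
        moreover have "inv u' r \<noteq> inv u' (Suc r)"
          using permutes_inverses[OF u'] by (metis n_not_Suc_n)
        ultimately have desc: "inv u' (Suc r) < inv u' r" by simp
        have su': "sw r \<circ> u' permutes {1..n}" by (rule permutes_compose[OF u' swp_perm])
        have "card (diagram n u') = Suc (card (diagram n (sw r \<circ> u')))"
          by (rule card_swap_desc[OF u' rg(1) rg(2) desc])
        then have "perm_len n u' = Suc (perm_len n (sw r \<circ> u'))" using L[OF u'] L[OF su'] by simp
        moreover have "perm_len n ((sw r \<circ> u') \<circ> v) \<le> perm_len n (sw r \<circ> u') + perm_len n v"
          by (rule perm_len_subadd[OF su' v])
        moreover have "(sw r \<circ> u') \<circ> v = w" using uvw sw by (simp add: comp_assoc)
        ultimately show False using lenw lenw' by simp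
      qed
      define Tu where "Tu = (\<lambda>i j. if i = inv u' r \<and> j = r then t else Tu' i (sw r j))"
      have lB: "swp n u' r t Tu Tu'" unfolding swp_def using u' rg asc_u by (simp add: Tu_def)
      interpret Bs: swp n u' r t Tu Tu' by (rule lB)
      have T'v: "\<And>a c. (a, c) \<in> diagram n u' \<Longrightarrow> T' (inv v a) c = Tu' a c"
      proof -
        fix a c assume h: "(a, c) \<in> diagram n u'"
        have va: "v (inv v a) = a" using permutes_inverses[OF v] by simp
        then have "(v (inv v a), c) \<in> diagram n u'" using h by simp
        then have "(inv v a, inv u' c) \<notin> diagram n v" by (rule disj_diagrams[OF u' v])
        then have "Tv (inv v a) (inv u' c) = 0" using BSL_zero[OF Bv] by simp
        then show "T' (inv v a) c = Tu' a c" using T'eq va by simp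
      qed
      have T'ge: "\<And>a b. t \<le> T' a b" unfolding T'_def using Tu_ge[OF B tmin t0] t0 by simp
      have tr: "- int r \<le> t" using BSL_flag[OF B qr(1)] t_def by simp
      have BTu: "is_BSL n (sw r \<circ> u') Tu"
      proof (rule Bs.BSL_L2[OF Bu' t0 tr])
        fix i c assume "(i, c) \<in> diagram n u'"
        then show "t \<le> Tu' i c" using T'v T'ge by metis
      next
        fix c assume h: "(inv u' r, c) \<in> diagram n u'"
        have e: "Tu' (inv u' r) c = T' q c" using T'v[OF h] pq permutes_inverses[OF v] by metis
        show "Tu' (inv u' r) c \<noteq> t"
        proof (cases "sw r c = r")
          case True then show ?thesis using e t0 unfolding T'_def by simp
        next
          case False
          have "T q (sw r c) \<noteq> t"
          proof
            assume eq: "T q (sw r c) = t"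
            then have "(q, sw r c) \<in> diagram n w" using BSL_zero[OF B] t0 by fastforce
            then have "0 \<le> T q (sw r c)" using BSL_row[OF B _ qr(1) False] eq t_def by simp
            then show False using eq t0 by simp
          qed
          then show ?thesis using e False unfolding T'_def by simp
        qed
      qed
      define u where "u = sw r \<circ> u'"
      have u: "u permutes {1..n}" unfolding u_def by (rule permutes_compose[OF u' swp_perm])
      have uv: "u \<circ> v = w" unfolding u_def using uvw sw by (simp add: comp_assoc)
      have lenu: "perm_len n u = Suc (perm_len n u')"
        using card_swap_asc[OF u' rg(1) rg(2) asc_u] L[OF u] L[OF u'] unfolding u_def by simp
      have mu: "\<forall>i j. (i, j) \<in> diagram n u \<longrightarrow> Tu i j < 0"
      proof (intro allI impI)
        fix i j assume h: "(i, j) \<in> diagram n u"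
        show "Tu i j < 0"
        proof (cases "i = inv u' r \<and> j = r")
          case True then show ?thesis using t0 Tu_def by simp
        next
          case False
          then have "(i, sw r j) \<in> diagram n u'" using Bs.memD h unfolding u_def by auto
          then show ?thesis using mu' False Tu_def by auto
        qed
      qed
      have iu: "\<And>x. inv u x = inv u' (sw r x)" unfolding u_def using inv_sw_comp[OF u'] by simp
      have Teq: "T = (\<lambda>i j. Tu (v i) j + Tv i (inv u j))"
      proof (intro ext)
        fix i j
        have vi: "v i = inv u' r \<longleftrightarrow> i = q" using pq permutes_inverses[OF v] by metis
        show "T i j = Tu (v i) j + Tv i (inv u j)"
        proof (cases "i = q \<and> j = r")
          case True
          have "(q, inv u' (Suc r)) \<notin> diagram n v"
            unfolding diagram_iff[OF v] using pq asc_u by auto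
          then have "Tv q (inv u' (Suc r)) = 0" using BSL_zero[OF Bv] by simp
          then show ?thesis using True vi iu t_def Tu_def by simp
        next
          case False
          have "T i j = T' i (sw r j)" unfolding T'_def using False by auto
          also have "\<dots> = Tu' (v i) (sw r j) + Tv i (inv u' (sw r j))" using T'eq by simp
          finally show ?thesis using False vi iu Tu_def by auto
        qed
      qed
      have "good n w T u v Tu Tv"
        unfolding good_def using u v uv lenw lenw' lenu BTu mu Bv mv Teq unfolding u_def by simp
      then show ?thesis by blast
    qed
  qed
qed

lemma good_pos:
  assumes G: "good n w T u v Tu Tv"
  shows "0 < T i j \<longleftrightarrow> (i, inv u j) \<in> diagram n v"
proof -
  have u: "u permutes {1..n}" and v: "v permutes {1..n}" and Bu: "is_BSL n u Tu"
    and mu: "\<forall>i j. (i, j) \<in> diagram n u \<longrightarrow> Tu i j < 0"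
    and Bv: "is_BSL n v Tv" and mv: "\<forall>i j. (i, j) \<in> diagram n v \<longrightarrow> 0 < Tv i j"
    and Te: "T = (\<lambda>i j. Tu (v i) j + Tv i (inv u j))"
    using G unfolding good_def by auto
  have Tule: "\<And>a b. Tu a b \<le> 0"
  proof -
    fix a b show "Tu a b \<le> 0"
      using mu BSL_zero[OF Bu, of a b] by (cases "(a, b) \<in> diagram n u") (auto simp: less_imp_le)
  qed
  show ?thesis
  proof (cases "(i, inv u j) \<in> diagram n v")
    case True
    then have "(v i, j) \<notin> diagram n u" using disj_diagrams[OF u v] by blast
    then have "Tu (v i) j = 0" using BSL_zero[OF Bu] by simp
    then show ?thesis using True mv Te by simp
  next
    case False
    then have "Tv i (inv u j) = 0" using BSL_zero[OF Bv] by simp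
    then show ?thesis using False Tule[of "v i" j] Te by simp
  qed
qed

lemma good_unique:
  assumes G1: "good n w T u1 v1 Tu1 Tv1" and G2: "good n w T u2 v2 Tu2 Tv2"
  shows "u1 = u2 \<and> v1 = v2 \<and> Tu1 = Tu2 \<and> Tv1 = Tv2"
proof -
  have u1: "u1 permutes {1..n}" and v1: "v1 permutes {1..n}" and w1: "u1 \<circ> v1 = w"
    and Bu1: "is_BSL n u1 Tu1" and Bv1: "is_BSL n v1 Tv1"
    and Te1: "T = (\<lambda>i j. Tu1 (v1 i) j + Tv1 i (inv u1 j))"
    using G1 unfolding good_def by auto
  have u2: "u2 permutes {1..n}" and v2: "v2 permutes {1..n}" and w2: "u2 \<circ> v2 = w"
    and Bu2: "is_BSL n u2 Tu2" and Bv2: "is_BSL n v2 Tv2"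
    and Te2: "T = (\<lambda>i j. Tu2 (v2 i) j + Tv2 i (inv u2 j))"
    using G2 unfolding good_def by auto
  have rowset: "\<And>u v Tu Tv i. good n w T u v Tu Tv \<Longrightarrow> card {j. 0 < T i j} = card {c. (i, c) \<in> diagram n v}"
  proof -
    fix u v Tu Tv i assume G: "good n w T u v Tu Tv"
    have u: "u permutes {1..n}" using G unfolding good_def by auto
    have "{j. 0 < T i j} = u ` {c. (i, c) \<in> diagram n v}"
    proof (rule set_eqI)
      fix j
      have "j \<in> u ` {c. (i, c) \<in> diagram n v} \<longleftrightarrow> (i, inv u j) \<in> diagram n v"
      proof
        assume "j \<in> u ` {c. (i, c) \<in> diagram n v}"
        then obtain c where "(i, c) \<in> diagram n v" "j = u c" by auto
        then show "(i, inv u j) \<in> diagram n v" using permutes_inverses[OF u] by simp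
      next
        assume "(i, inv u j) \<in> diagram n v"
        moreover have "u (inv u j) = j" using permutes_inverses[OF u] by simp
        ultimately show "j \<in> u ` {c. (i, c) \<in> diagram n v}" by (metis (mono_tags) imageI mem_Collect_eq)
      qed
      then show "j \<in> {j. 0 < T i j} \<longleftrightarrow> j \<in> u ` {c. (i, c) \<in> diagram n v}" using good_pos[OF G] by simp
    qed
    moreover have "inj_on u X" for X using permutes_inj[OF u] by (simp add: inj_on_def inj_def)
    ultimately show "card {j. 0 < T i j} = card {c. (i, c) \<in> diagram n v}" by (simp add: card_image)
  qed
  have vv: "v1 = v2"
    by (rule rows_determine[OF v1 v2]) (use rowset[OF G1] rowset[OF G2] in metis)
  have uu: "u1 = u2"
  proof (rule ext)
    fix x
    have "u1 (v1 (inv v1 x)) = u2 (v2 (inv v1 x))" using w1 w2 by (metis comp_apply)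
    then show "u1 x = u2 x" using vv permutes_inverses[OF v1] by simp
  qed
  have tv: "Tv1 = Tv2"
  proof (intro ext)
    fix i c
    show "Tv1 i c = Tv2 i c"
    proof (cases "(i, c) \<in> diagram n v1")
      case True
      have e: "\<And>u v Tu Tv. u permutes {1..n} \<Longrightarrow> v permutes {1..n} \<Longrightarrow> is_BSL n u Tu \<Longrightarrow>
          T = (\<lambda>i j. Tu (v i) j + Tv i (inv u j)) \<Longrightarrow> (i, c) \<in> diagram n v \<Longrightarrow> Tv i c = T i (u c)"
      proof -
        fix u v Tu Tv assume u: "u permutes {1..n}" and v: "v permutes {1..n}" and Bu: "is_BSL n u Tu"
          and Te: "T = (\<lambda>i j. Tu (v i) j + Tv i (inv u j))" and h: "(i, c) \<in> diagram n v"
        have iu: "inv u (u c) = c" using permutes_inverses[OF u] by simp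
        have "(v i, u c) \<notin> diagram n u"
        proof
          assume "(v i, u c) \<in> diagram n u"
          then have "(i, inv u (u c)) \<notin> diagram n v" by (rule disj_diagrams[OF u v])
          then show False using h iu by simp
        qed
        then have "Tu (v i) (u c) = 0" using BSL_zero[OF Bu] by simp
        then show "Tv i c = T i (u c)" using Te iu by simp
      qed
      show ?thesis using e[OF u1 v1 Bu1 Te1 True] e[OF u2 v2 Bu2 Te2] True vv uu by simp
    next
      case False
      then show ?thesis using BSL_zero[OF Bv1] BSL_zero[OF Bv2] vv by simp
    qed
  qed
  have tu: "Tu1 = Tu2"
  proof (intro ext)
    fix a c
    show "Tu1 a c = Tu2 a c"
    proof (cases "(a, c) \<in> diagram n u1")
      case True
      have e: "\<And>u v Tu Tv. u permutes {1..n} \<Longrightarrow> v permutes {1..n} \<Longrightarrow> is_BSL n v Tv \<Longrightarrow>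
          T = (\<lambda>i j. Tu (v i) j + Tv i (inv u j)) \<Longrightarrow> (a, c) \<in> diagram n u \<Longrightarrow> Tu a c = T (inv v a) c"
      proof -
        fix u v Tu Tv assume u: "u permutes {1..n}" and v: "v permutes {1..n}" and Bv: "is_BSL n v Tv"
          and Te: "T = (\<lambda>i j. Tu (v i) j + Tv i (inv u j))" and h: "(a, c) \<in> diagram n u"
        have va: "v (inv v a) = a" using permutes_inverses[OF v] by simp
        have "(inv v a, inv u c) \<notin> diagram n v" using disj_diagrams[OF u v, of "inv v a" c] h va by simp
        then have "Tv (inv v a) (inv u c) = 0" using BSL_zero[OF Bv] by simp
        then show "Tu a c = T (inv v a) c" using Te va by simp
      qed
      show ?thesis using e[OF u1 v1 Bv1 Te1 True] e[OF u2 v2 Bv2 Te2] True vv uu by simp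
    next
      case False
      then show ?thesis using BSL_zero[OF Bu1] BSL_zero[OF Bu2] uu by simp
    qed
  qed
  show ?thesis using uu vv tu tv by simp
qed

theorem mainTheorem1:
  fixes n :: nat
  shows "(\<forall>u v Tu Tv.
            u permutes {1..n} \<and> v permutes {1..n} \<and>
            perm_len n (u \<circ> v) = perm_len n u + perm_len n v \<and>
            is_BSL n u Tu \<and> (\<forall>(i, j) \<in> diagram n u. is_marked (Tu i j)) \<and>
            is_BSL n v Tv \<and> (\<forall>(i, j) \<in> diagram n v. is_unmarked (Tv i j))
          \<longrightarrow> is_BSL n (u \<circ> v)
                (arr_add (perm_act_right Tu (inv v)) (perm_act_left (inv u) Tv)))
       \<and>
         (\<forall>w T. w permutes {1..n} \<and> is_BSL n w T \<longrightarrow>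
            (\<exists>!(u, v, Tu, Tv).
               u permutes {1..n} \<and> v permutes {1..n} \<and> u \<circ> v = w \<and>
               perm_len n w = perm_len n u + perm_len n v \<and>
               is_BSL n u Tu \<and> (\<forall>(i, j) \<in> diagram n u. is_marked (Tu i j)) \<and>
               is_BSL n v Tv \<and> (\<forall>(i, j) \<in> diagram n v. is_unmarked (Tv i j)) \<and>
               T = arr_add (perm_act_right Tu (inv v)) (perm_act_left (inv u) Tv)))"
proof (intro conjI allI impI)
  fix u v Tu Tv
  assume h: "u permutes {1..n} \<and> v permutes {1..n} \<and>
            perm_len n (u \<circ> v) = perm_len n u + perm_len n v \<and>
            is_BSL n u Tu \<and> (\<forall>(i, j) \<in> diagram n u. is_marked (Tu i j)) \<and>
            is_BSL n v Tv \<and> (\<forall>(i, j) \<in> diagram n v. is_unmarked (Tv i j))"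
  then have u: "u permutes {1..n}" and v: "v permutes {1..n}" by auto
  have mu: "\<forall>i j. (i, j) \<in> diagram n u \<longrightarrow> Tu i j < 0" using h unfolding is_marked_def by auto
  have mv: "\<forall>i j. (i, j) \<in> diagram n v \<longrightarrow> 0 < Tv i j" using h unfolding is_unmarked_def by auto
  show "is_BSL n (u \<circ> v) (arr_add (perm_act_right Tu (inv v)) (perm_act_left (inv u) Tv))"
    unfolding combine_eq[OF u v]
    using part1[of n "card (diagram n u)", rule_format, of u v Tu Tv] h mu mv by blast
next
  fix w T
  assume h: "w permutes {1..n} \<and> is_BSL n w T"
  let ?P = "\<lambda>(u, v, Tu, Tv).
               u permutes {1..n} \<and> v permutes {1..n} \<and> u \<circ> v = w \<and>
               perm_len n w = perm_len n u + perm_len n v \<and>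
               is_BSL n u Tu \<and> (\<forall>(i, j) \<in> diagram n u. is_marked (Tu i j)) \<and>
               is_BSL n v Tv \<and> (\<forall>(i, j) \<in> diagram n v. is_unmarked (Tv i j)) \<and>
               T = arr_add (perm_act_right Tu (inv v)) (perm_act_left (inv u) Tv)"
  have m1: "\<And>u Tu. (\<forall>(i, j) \<in> diagram n u. is_marked (Tu i j)) \<longleftrightarrow> (\<forall>i j. (i, j) \<in> diagram n u \<longrightarrow> Tu i j < 0)"
    unfolding is_marked_def by (auto simp: Ball_def)
  have m2: "\<And>v Tv. (\<forall>(i, j) \<in> diagram n v. is_unmarked (Tv i j)) \<longleftrightarrow> (\<forall>i j. (i, j) \<in> diagram n v \<longrightarrow> 0 < Tv i j)"
    unfolding is_unmarked_def by (auto simp: Ball_def)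
  have Peq: "?P (u, v, Tu, Tv) \<longleftrightarrow> good n w T u v Tu Tv" for u v Tu Tv
  proof (cases "u permutes {1..n} \<and> v permutes {1..n}")
    case True
    then have u: "u permutes {1..n}" and v: "v permutes {1..n}" by auto
    show ?thesis unfolding prod.case m1 m2 combine_eq[OF u v] good_def by (rule refl)
  next
    case False
    have a: "\<not> ?P (u, v, Tu, Tv)" unfolding prod.case using False by blast
    have b: "\<not> good n w T u v Tu Tv" unfolding good_def using False by blast
    show ?thesis
    proof
      assume "?P (u, v, Tu, Tv)" with a show "good n w T u v Tu Tv" by (rule notE)
    next
      assume "good n w T u v Tu Tv" with b show "?P (u, v, Tu, Tv)" by (rule notE)
    qed
  qed
  obtain u v Tu Tv where g: "good n w T u v Tu Tv"
    using part2[of n "card (diagram n w)", rule_format, of w T] h by blast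
  show "\<exists>!x. ?P x"
  proof (rule ex1I[of _ "(u, v, Tu, Tv)"])
    show "?P (u, v, Tu, Tv)" by (rule Peq[THEN iffD2, OF g])
  next
    fix x assume px: "?P x"
    obtain u' v' Tu' Tv' where x: "x = (u', v', Tu', Tv')" by (cases x) auto
    have "?P (u', v', Tu', Tv')" using px unfolding x .
    then have "good n w T u' v' Tu' Tv'" by (rule Peq[THEN iffD1])
    then show "x = (u, v, Tu, Tv)" using good_unique[OF _ g] x by simp
  qed
qed

end
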